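(* Let $p$ be a prime, let $G$ be a finite soluble group with $O_p(G)=1$, and let $A$ be a non-empty normal subset of $G$ consisting of elements of order $p$ such that every element of $A^2=\{xy\mid x,y\in A\}$ is a $p$-element. Let $a\in A\setminus G'$ and $c\in G'$, and suppose that $X=\langle c,a\rangle$ is elementary abelian of order $p^2$. Then $|a^G\cap X|<p$.
   Context: A normal subset of $G$ is a subset closed under conjugation by elements of $G$. $O_p(G)$ is the largest normal $p$-subgroup of $G$, $G'$ is the derived subgroup, and $a^G$ is the conjugacy class of $a$. *)

theory Defs
  imports "HOL-Algebra.Algebra" "HOL-Algebra.Multiplicative_Group"
begin

definition p_subgroup :: "nat \<Rightarrow> 'a set \<Rightarrow> ('a, 'b) monoid_scheme \<Rightarrow> bool" where
  "p_subgroup p H G \<longleftrightarrow> subgroup H G \<and> (\<exists>k. card H = p ^ k)"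

(* O_p(G) = 1: the largest normal p-subgroup is trivial, i.e. every normal p-subgroup is trivial *)
definition Op_trivial :: "nat \<Rightarrow> ('a, 'b) monoid_scheme \<Rightarrow> bool" where
  "Op_trivial p G \<longleftrightarrow> (\<forall>N. p_subgroup p N G \<and> N \<lhd> G \<longrightarrow> N = {\<one>\<^bsub>G\<^esub>})"

definition p_element :: "nat \<Rightarrow> ('a, 'b) monoid_scheme \<Rightarrow> 'a \<Rightarrow> bool" where
  "p_element p G x \<longleftrightarrow> x \<in> carrier G \<and> (\<exists>k. group.ord G x = p ^ k)"

definition normal_subset :: "'a set \<Rightarrow> ('a, 'b) monoid_scheme \<Rightarrow> bool" where
  "normal_subset A G \<longleftrightarrow> A \<subseteq> carrier G \<and>
     (\<forall>g\<in>carrier G. \<forall>x\<in>A. g \<otimes>\<^bsub>G\<^esub> x \<otimes>\<^bsub>G\<^esub> inv\<^bsub>G\<^esub> g \<in> A)"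

definition conj_class :: "('a, 'b) monoid_scheme \<Rightarrow> 'a \<Rightarrow> 'a set" where
  "conj_class G a = {g \<otimes>\<^bsub>G\<^esub> a \<otimes>\<^bsub>G\<^esub> inv\<^bsub>G\<^esub> g | g. g \<in> carrier G}"

definition elem_abelian_of_order :: "nat \<Rightarrow> nat \<Rightarrow> 'a set \<Rightarrow> ('a, 'b) monoid_scheme \<Rightarrow> bool" where
  "elem_abelian_of_order p n H G \<longleftrightarrow> subgroup H G \<and> card H = p ^ n \<and>
     (\<forall>x\<in>H. \<forall>y\<in>H. x \<otimes>\<^bsub>G\<^esub> y = y \<otimes>\<^bsub>G\<^esub> x) \<and>
     (\<forall>x\<in>H. x [^]\<^bsub>G\<^esub> p = \<one>\<^bsub>G\<^esub>)"

end

theory Submission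
  imports Defs
begin

context group begin

lemma cancel1 [simp]: "x \<in> carrier G \<Longrightarrow> y \<in> carrier G \<Longrightarrow> x \<otimes> (inv x \<otimes> y) = y"
  by (simp add: m_assoc[symmetric])

lemma cancel2 [simp]: "x \<in> carrier G \<Longrightarrow> y \<in> carrier G \<Longrightarrow> inv x \<otimes> (x \<otimes> y) = y"
  by (simp add: m_assoc[symmetric])

lemma comm_from_comm:
  assumes "a \<in> carrier G" "b \<in> carrier G" "inv a \<otimes> inv b \<otimes> a \<otimes> b = \<one>"
  shows "b \<otimes> a = a \<otimes> b"
proof -
  have "inv a \<otimes> inv b \<otimes> a \<otimes> b = inv (b \<otimes> a) \<otimes> (a \<otimes> b)"
    using assms by (simp add: inv_mult_group m_assoc)
  then have "inv (b \<otimes> a) \<otimes> (a \<otimes> b) = \<one>" using assms(3) by simp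
  then have "a \<otimes> b = (b \<otimes> a) \<otimes> \<one>"
    using inv_solve_left'[of "\<one>" "b \<otimes> a" "a \<otimes> b"] assms by simp
  then show ?thesis using assms by simp
qed

lemma comm_inv:
  assumes "a \<in> carrier G" "b \<in> carrier G" "a \<otimes> b = b \<otimes> a"
  shows "a \<otimes> inv b = inv b \<otimes> a"
proof -
  have "inv b \<otimes> a = inv b \<otimes> (a \<otimes> b) \<otimes> inv b" using assms(1,2) by (simp add: m_assoc)
  also have "\<dots> = inv b \<otimes> (b \<otimes> a) \<otimes> inv b" using assms(3) by simp
  also have "\<dots> = a \<otimes> inv b" using assms by (simp add: m_assoc)
  finally show ?thesis by (rule sym)
qed

lemma comm_mult:
  assumes "a \<in> carrier G" "b \<in> carrier G" "c \<in> carrier G" "a \<otimes> b = b \<otimes> a" "a \<otimes> c = c \<otimes> a"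
  shows "a \<otimes> (b \<otimes> c) = (b \<otimes> c) \<otimes> a"
proof -
  have "a \<otimes> (b \<otimes> c) = (a \<otimes> b) \<otimes> c" using assms(1-3) by (simp add: m_assoc)
  also have "\<dots> = (b \<otimes> a) \<otimes> c" by (simp only: assms(4))
  also have "\<dots> = b \<otimes> (a \<otimes> c)" using assms(1-3) by (simp add: m_assoc)
  also have "\<dots> = b \<otimes> (c \<otimes> a)" by (simp only: assms(5))
  also have "\<dots> = (b \<otimes> c) \<otimes> a" using assms(1-3) by (simp add: m_assoc)
  finally show ?thesis .
qed

lemma coprime_pow_one:
  assumes "x \<in> carrier G" "coprime (ord x) p" "x [^] ((p::nat)^n) = \<one>"
  shows "x = \<one>"
proof -
  have "ord x dvd p^n" using assms pow_eq_id by blast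
  moreover have "coprime (ord x) (p^n)" using assms(2) by simp
  ultimately have "ord x = 1" by (metis coprime_iff_gcd_eq_1 gcd_nat.absorb1)
  then show ?thesis using assms ord_eq_1 by blast
qed

lemma pe_pow:
  assumes "x \<in> carrier G" "x [^] ((p::nat)^k) = \<one>" "k \<le> n"
  shows "x [^] (p^n) = \<one>"
proof -
  have "p^k dvd p^n" using assms(3) by (simp add: le_imp_power_dvd)
  then show ?thesis using assms pow_eq_id by (meson dvd_trans)
qed

lemma K1:
  assumes Anorm: "\<forall>g\<in>carrier G. \<forall>x\<in>A. g \<otimes> x \<otimes> inv g \<in> A" and AC: "A \<subseteq> carrier G"
  and Ap: "\<forall>x\<in>A. \<forall>y\<in>A. \<exists>k. (x \<otimes> y) [^] ((p::nat)^k) = \<one>"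
  and V: "V \<lhd> G" and Vc: "\<forall>v\<in>V. coprime (ord v) p"
  and x: "x \<in> A" and g: "g \<in> A" and xg: "x \<otimes> g = g \<otimes> x"
  and u: "u \<in> V" and uh: "u \<otimes> (x \<otimes> g) = (x \<otimes> g) \<otimes> u"
  shows "u \<otimes> g = g \<otimes> u"
proof -
  have xc: "x \<in> carrier G" and gc: "g \<in> carrier G" using x g AC by auto
  have Vs: "subgroup V G" using V by (rule normal.axioms(1))
  have uc: "u \<in> carrier G" using subgroup.mem_carrier[OF Vs u] .
  define w where "w = inv g \<otimes> inv u \<otimes> g \<otimes> u"
  have gu: "inv u \<otimes> g \<otimes> u \<in> A" using Anorm[rule_format, of "inv u" g] uc g by simp
  have "inv g \<otimes> inv u \<otimes> g \<in> V" using normal.inv_op_closed1[OF V gc subgroup.m_inv_closed[OF Vs u]] .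
  then have wV: "w \<in> V" unfolding w_def using subgroup.m_closed[OF Vs _ u] by blast
  have wc: "w \<in> carrier G" using subgroup.mem_carrier[OF Vs wV] .
  define h where "h = x \<otimes> g"
  have hc: "h \<in> carrier G" using xc gc h_def by simp
  have eq: "x \<otimes> (inv u \<otimes> g \<otimes> u) = h \<otimes> w" unfolding w_def h_def
    using xc gc uc by (simp add: m_assoc)
  have hg: "h \<otimes> g = g \<otimes> h" unfolding h_def using xg xc gc by (simp add: m_assoc)
  have hu: "h \<otimes> u = u \<otimes> h" using uh h_def by simp
  have h1: "h \<otimes> inv g = inv g \<otimes> h" using comm_inv hc gc hg by blast
  have h2: "h \<otimes> inv u = inv u \<otimes> h" using comm_inv hc uc hu by blast
  have h3: "h \<otimes> (inv g \<otimes> inv u) = (inv g \<otimes> inv u) \<otimes> h"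
    using comm_mult[OF hc _ _ h1 h2] gc uc by simp
  have h4: "h \<otimes> (inv g \<otimes> inv u \<otimes> g) = (inv g \<otimes> inv u \<otimes> g) \<otimes> h"
    using comm_mult[OF hc _ _ h3 hg] gc uc by simp
  have hw: "h \<otimes> w = w \<otimes> h" unfolding w_def
    using comm_mult[OF hc _ _ h4 hu] gc uc by simp
  obtain k1 where k1: "h [^] (p^k1) = \<one>" using Ap x g h_def by blast
  obtain k2 where k2: "(h \<otimes> w) [^] (p^k2) = \<one>" using Ap[rule_format, OF x gu] unfolding eq by blast
  have "h [^] (p^(k1+k2)) = \<one>" using pe_pow[OF hc k1] by simp
  moreover have "(h \<otimes> w) [^] (p^(k1+k2)) = \<one>" using pe_pow[OF _ k2] hc wc by simp
  ultimately have "w [^] (p^(k1+k2)) = \<one>" using pow_mult_distrib[OF hw hc wc] wc by simp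
  then have "w = \<one>" using coprime_pow_one wc Vc wV by blast
  then have "inv g \<otimes> inv u \<otimes> g \<otimes> u = \<one>" unfolding w_def .
  then show ?thesis by (rule comm_from_comm[OF gc uc])
qed

end

lemma inj_mod_lin_aux:
  assumes "coprime k (p::nat)" "x < p" "y \<le> x" "(x * k + b) mod p = (y * k + b) mod p"
  shows "x = y"
proof -
  have le: "y * k + b \<le> x * k + b" using assms(3) by (simp add: mult_le_mono1)
  have "p dvd (x * k + b) - (y * k + b)" using mod_eq_dvd_iff_nat[OF le] assms(4) by simp
  then have "p dvd (x - y) * k" by (simp add: diff_mult_distrib)
  then have d: "p dvd (x - y)" using assms(1) coprime_dvd_mult_left_iff[of p k "x - y"] coprime_commute by blast
  have "x - y < p" using assms by simp
  then have "x - y = 0" using d  by (meson dvd_imp_le not_le zero_less_iff_neq_zero)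
  then show ?thesis using assms(3) by simp
qed

lemma inj_mod_lin:
  assumes "Factorial_Ring.prime (p::nat)" "coprime k p"
  shows "inj_on (\<lambda>j. (j * k + b) mod p) {..<p}"
proof
  fix x y assume x: "x \<in> {..<p}" and y: "y \<in> {..<p}" and e: "(x * k + b) mod p = (y * k + b) mod p"
  show "x = y"
  proof (cases "y \<le> x")
    case True
    have "x < p" using x by simp
    then show ?thesis using inj_mod_lin_aux[OF assms(2) _ True e] by simp
  next
    case False
    then have "x \<le> y" by simp
    moreover have "y < p" using y by simp
    ultimately have "y = x" using inj_mod_lin_aux[OF assms(2) _ _ e[symmetric]] by simp
    then show ?thesis by simp
  qed
qed

lemma image_mod_lin:
  assumes "Factorial_Ring.prime (p::nat)" "coprime k p"
  shows "(\<lambda>j. (j * k + b) mod p) ` {..<p} = {..<p}"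
proof (rule endo_inj_surj)
  have "p > 0" using assms(1) prime_gt_0_nat by blast
  then show "(\<lambda>j. (j * k + b) mod p) ` {..<p} \<subseteq> {..<p}" by auto
  show "inj_on (\<lambda>j. (j * k + b) mod p) {..<p}" by (rule inj_mod_lin[OF assms])
qed simp

locale keyctx = group G for G (structure) +
  fixes p :: nat and A V :: "'a set" and a c :: 'a
  assumes prime: "Factorial_Ring.prime p"
  and Anorm: "\<forall>g\<in>carrier G. \<forall>x\<in>A. g \<otimes> x \<otimes> inv g \<in> A" and AC: "A \<subseteq> carrier G"
  and Ap: "\<forall>x\<in>A. \<forall>y\<in>A. \<exists>k. (x \<otimes> y) [^] (p^k) = \<one>"
  and Vn: "V \<lhd> G" and Vc: "\<forall>v\<in>V. coprime (ord v) p"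
  and Vab: "\<forall>u\<in>V. \<forall>v\<in>V. u \<otimes> v = v \<otimes> u"
  and ac: "a \<in> carrier G" "c \<in> carrier G" "a \<otimes> c = c \<otimes> a"
  and ap: "a [^] p = \<one>" and cp: "c [^] p = \<one>"
  and aA: "\<And>m::nat. a \<otimes> c [^] m \<in> A"

begin

lemma Vs: "subgroup V G" using Vn by (rule normal.axioms(1))
lemma Vcar: "v \<in> V \<Longrightarrow> v \<in> carrier G" using subgroup.mem_carrier[OF Vs] .

lemma comm_pow:
  assumes "x \<in> carrier G" "y \<in> carrier G" "x \<otimes> y = y \<otimes> x"
  shows "x \<otimes> y [^] (n::nat) = y [^] n \<otimes> x"
proof (induct n)
  case 0 then show ?case using assms by simp
next
  case (Suc n)
  have "x \<otimes> y [^] Suc n = (x \<otimes> y [^] n) \<otimes> y" using assms(1,2) by (simp add: m_assoc)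
  also have "\<dots> = (y [^] n \<otimes> x) \<otimes> y" by (simp only: Suc)
  also have "\<dots> = y [^] n \<otimes> (x \<otimes> y)" using assms(1,2) by (simp add: m_assoc)
  also have "\<dots> = y [^] n \<otimes> (y \<otimes> x)" by (simp only: assms(3))
  also have "\<dots> = y [^] Suc n \<otimes> x" using assms(1,2) by (simp add: m_assoc)
  finally show ?case .
qed

lemma c_mod: "c [^] (n::nat) = c [^] (n mod p)"
proof -
  have "c [^] n = c [^] (p * (n div p) + n mod p)" by simp
  also have "\<dots> = (c [^] p) [^] (n div p) \<otimes> c [^] (n mod p)" using ac by (simp add: nat_pow_mult nat_pow_pow)
  finally show ?thesis using cp ac by simp
qed

lemma acA: "a \<otimes> c [^] (m::nat) \<in> carrier G" using ac by simp

lemma ac_mult: "(a \<otimes> c [^] (i::nat)) \<otimes> (a \<otimes> c [^] (j::nat)) = a [^] (2::nat) \<otimes> c [^] (i + j)"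
proof -
  have "(a \<otimes> c [^] i) \<otimes> (a \<otimes> c [^] j) = a \<otimes> (c [^] i \<otimes> a) \<otimes> c [^] j" using ac by (simp add: m_assoc)
  also have "\<dots> = a \<otimes> (a \<otimes> c [^] i) \<otimes> c [^] j" using comm_pow[OF ac] by simp
  also have "\<dots> = a [^] (2::nat) \<otimes> c [^] (i + j)" using ac by (simp add: m_assoc nat_pow_mult numeral_2_eq_2)
  finally show ?thesis .
qed

lemma K2:
  fixes m j :: nat
  assumes u: "u \<in> V" and um: "u \<otimes> (a \<otimes> c [^] m) = (a \<otimes> c [^] m) \<otimes> u"
  shows "u \<otimes> (a \<otimes> c [^] j) = (a \<otimes> c [^] j) \<otimes> u"
proof -
  define i where "i = 2 * m + (p - 1) * j"
  have pj: "p \<ge> 1" using prime_gt_0_nat[OF prime] by simp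
  have "(i + j) mod p = (2 * m) mod p"
  proof -
    obtain q where q: "p = Suc q" using pj by (cases p) auto
    have "i + j = 2 * m + p * j" unfolding i_def q by simp
    then show ?thesis by simp
  qed
  note hyp = this
  have "c [^] (i + j) = c [^] ((i + j) mod p)" by (rule c_mod)
  also have "\<dots> = c [^] ((2 * m) mod p)" using hyp by (simp only:)
  also have "\<dots> = c [^] (2 * m)" by (rule c_mod[symmetric])
  also have "\<dots> = c [^] (m + m)" by (simp only: mult_2)
  finally have cij: "c [^] (i + j) = c [^] (m + m)" .
  have e1: "(a \<otimes> c [^] i) \<otimes> (a \<otimes> c [^] j) = (a \<otimes> c [^] m) \<otimes> (a \<otimes> c [^] m)"
    using ac_mult cij by simp
  have e2: "(a \<otimes> c [^] i) \<otimes> (a \<otimes> c [^] j) = (a \<otimes> c [^] j) \<otimes> (a \<otimes> c [^] i)"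
    using ac_mult by (simp add: add.commute)
  have uc: "u \<in> carrier G" using Vcar u .
  have "u \<otimes> ((a \<otimes> c [^] m) \<otimes> (a \<otimes> c [^] m)) = ((a \<otimes> c [^] m) \<otimes> (a \<otimes> c [^] m)) \<otimes> u"
    using comm_mult[OF uc acA acA] um by simp
  then have "u \<otimes> ((a \<otimes> c [^] i) \<otimes> (a \<otimes> c [^] j)) = ((a \<otimes> c [^] i) \<otimes> (a \<otimes> c [^] j)) \<otimes> u"
    using e1 by simp
  then show ?thesis
    using K1[OF Anorm AC Ap Vn Vc aA aA e2 u] by simp
qed

lemma K2c:
  fixes m :: nat
  assumes u: "u \<in> V" and um: "u \<otimes> (a \<otimes> c [^] m) = (a \<otimes> c [^] m) \<otimes> u"
  shows "u \<otimes> c = c \<otimes> u"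
proof -
  have uc: "u \<in> carrier G" using Vcar u .
  have h1: "u \<otimes> (a \<otimes> c [^] Suc m) = (a \<otimes> c [^] Suc m) \<otimes> u" using K2[OF u um] .
  have h2: "u \<otimes> inv (a \<otimes> c [^] m) = inv (a \<otimes> c [^] m) \<otimes> u" using comm_inv[OF uc acA] um by simp
  have e: "a \<otimes> c [^] Suc m = (a \<otimes> c [^] m) \<otimes> c" using ac by (simp add: m_assoc)
  have "inv (a \<otimes> c [^] m) \<otimes> ((a \<otimes> c [^] m) \<otimes> c) = c"
    by (rule cancel2) (use ac in simp)+
  then have "c = inv (a \<otimes> c [^] m) \<otimes> (a \<otimes> c [^] Suc m)" using e by simp
  then show ?thesis using comm_mult[OF uc _ acA h2 h1] ac by simp
qed

end

sublocale keyctx \<subseteq> VG: comm_group "G\<lparr>carrier := V\<rparr>"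
proof -
  have "group (G\<lparr>carrier := V\<rparr>)" using subgroup.subgroup_is_group[OF Vs is_group] .
  then show "comm_group (G\<lparr>carrier := V\<rparr>)"
    by (rule group.group_comm_groupI) (use Vab in simp)
qed

context keyctx begin

definition cj :: "'a \<Rightarrow> 'a \<Rightarrow> 'a" where "cj y w = inv y \<otimes> w \<otimes> y"

definition NN :: "'a \<Rightarrow> 'a \<Rightarrow> 'a" where
  "NN y w = finprod (G\<lparr>carrier := V\<rparr>) (\<lambda>k. cj (y [^] k) w) {..<p}"

lemma VG_one: "\<one>\<^bsub>G\<lparr>carrier := V\<rparr>\<^esub> = \<one>" by simp

lemma VG_finprod_one [simp]: "finprod (G\<lparr>carrier := V\<rparr>) (\<lambda>i. \<one>) S = \<one>"
  using VG.finprod_one[of S] by (simp only: VG_one)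

lemma VG_closed: "f \<in> S \<rightarrow> V \<Longrightarrow> finprod (G\<lparr>carrier := V\<rparr>) f S \<in> V"
  using VG.finprod_closed[of f S] by simp

lemma pow_comm2:
  assumes x: "x \<in> carrier G" and y: "y \<in> carrier G" and xy: "x \<otimes> y = y \<otimes> x"
  shows "x [^] (m::nat) \<otimes> y [^] (n::nat) = y [^] n \<otimes> x [^] m"
proof -
  have 1: "x \<otimes> y [^] n = y [^] n \<otimes> x" by (rule comm_pow[OF x y xy])
  have 2: "y [^] n \<otimes> x [^] m = x [^] m \<otimes> y [^] n"
    by (rule comm_pow) (use x y 1 in auto)
  show ?thesis by (rule sym[OF 2])
qed

lemma cj_V: "y \<in> carrier G \<Longrightarrow> w \<in> V \<Longrightarrow> cj y w \<in> V"
  unfolding cj_def using normal.inv_op_closed1[OF Vn] by blast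

lemma cj_mult: "y \<in> carrier G \<Longrightarrow> u \<in> carrier G \<Longrightarrow> w \<in> carrier G \<Longrightarrow> cj y (u \<otimes> w) = cj y u \<otimes> cj y w"
  unfolding cj_def by (simp add: m_assoc)

lemma cj_one: "y \<in> carrier G \<Longrightarrow> cj y \<one> = \<one>"
  unfolding cj_def by simp

lemma cj_cj: "y \<in> carrier G \<Longrightarrow> z \<in> carrier G \<Longrightarrow> w \<in> carrier G \<Longrightarrow> cj z (cj y w) = cj (y \<otimes> z) w"
  unfolding cj_def by (simp add: m_assoc inv_mult_group)

lemma cj_fix: "y \<in> carrier G \<Longrightarrow> w \<in> carrier G \<Longrightarrow> cj y w = w \<Longrightarrow> w \<otimes> y = y \<otimes> w"
  unfolding cj_def by (metis cancel1 inv_closed m_assoc m_closed)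

lemma cj_fix2: "y \<in> carrier G \<Longrightarrow> w \<in> carrier G \<Longrightarrow> w \<otimes> y = y \<otimes> w \<Longrightarrow> cj y w = w"
  unfolding cj_def by (simp add: m_assoc)

lemma cj_carrier: "y \<in> carrier G \<Longrightarrow> w \<in> carrier G \<Longrightarrow> cj y w \<in> carrier G"
  unfolding cj_def by simp

lemma cj_finprod:
  assumes y: "y \<in> carrier G" and S: "finite S"
  shows "f \<in> S \<rightarrow> V \<Longrightarrow> cj y (finprod (G\<lparr>carrier := V\<rparr>) f S) = finprod (G\<lparr>carrier := V\<rparr>) (\<lambda>k. cj y (f k)) S"
  using S
proof (induct S rule: finite_induct)
  case empty
  then show ?case using cj_one y by simp
next
  case (insert x F)
  have fF: "f \<in> F \<rightarrow> V" and fx: "f x \<in> V" using insert by auto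
  have gF: "(\<lambda>k. cj y (f k)) \<in> F \<rightarrow> V" using fF cj_V y by auto
  have "cj y (finprod (G\<lparr>carrier := V\<rparr>) f (insert x F)) = cj y (f x \<otimes> finprod (G\<lparr>carrier := V\<rparr>) f F)"
    using insert fF fx by simp
  also have "\<dots> = cj y (f x) \<otimes> cj y (finprod (G\<lparr>carrier := V\<rparr>) f F)"
    using cj_mult y Vcar fx VG.finprod_closed[of f F] fF by simp
  also have "\<dots> = cj y (f x) \<otimes> finprod (G\<lparr>carrier := V\<rparr>) (\<lambda>k. cj y (f k)) F"
    using insert fF by simp
  also have "\<dots> = finprod (G\<lparr>carrier := V\<rparr>) (\<lambda>k. cj y (f k)) (insert x F)"
    using insert gF cj_V[OF y fx] by simp
  finally show ?case .
qed

lemma pow_mod_p: "y \<in> carrier G \<Longrightarrow> y [^] p = \<one> \<Longrightarrow> y [^] (n::nat) = y [^] (n mod p)"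
proof -
  assume y: "y \<in> carrier G" and yp: "y [^] p = \<one>"
  have "y [^] n = y [^] (p * (n div p) + n mod p)" by simp
  also have "\<dots> = (y [^] p) [^] (n div p) \<otimes> y [^] (n mod p)" using y by (simp add: nat_pow_mult nat_pow_pow)
  finally show ?thesis using yp y by simp
qed

lemma pgt0: "p > 0" using prime_gt_0_nat[OF prime] .

lemma NN_V: "y \<in> carrier G \<Longrightarrow> w \<in> V \<Longrightarrow> NN y w \<in> V"
  unfolding NN_def using VG.finprod_closed[of "\<lambda>k. cj (y [^] k) w" "{..<p}"] cj_V by simp

lemma NN_fixed:
  assumes y: "y \<in> carrier G" and yp: "y [^] p = \<one>" and w: "w \<in> V"
  shows "cj y (NN y w) = NN y w"
proof -
  have f: "(\<lambda>k. cj (y [^] k) w) \<in> {..<p} \<rightarrow> V" using cj_V y w by simp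
  have "cj y (NN y w) = finprod (G\<lparr>carrier := V\<rparr>) (\<lambda>k. cj y (cj (y [^] k) w)) {..<p}"
    unfolding NN_def using cj_finprod[OF y _ f] by simp
  also have "\<dots> = finprod (G\<lparr>carrier := V\<rparr>) (\<lambda>k. cj (y [^] ((k * 1 + 1) mod p)) w) {..<p}"
  proof (rule VG.finprod_cong')
    fix k assume "k \<in> {..<p}"
    have "cj y (cj (y [^] k) w) = cj (y [^] k \<otimes> y) w" using cj_cj y Vcar w by simp
    also have "\<dots> = cj (y [^] Suc k) w" using y by simp
    also have "\<dots> = cj (y [^] ((k * 1 + 1) mod p)) w" using pow_mod_p[OF y yp, of "Suc k"] by simp
    finally show "cj y (cj (y [^] k) w) = cj (y [^] ((k * 1 + 1) mod p)) w" .
  qed (use cj_V y w in auto)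
  also have "\<dots> = finprod (G\<lparr>carrier := V\<rparr>) (\<lambda>k. cj (y [^] k) w) ((\<lambda>k. (k * 1 + 1) mod p) ` {..<p})"
    by (rule VG.finprod_reindex[symmetric]) (use cj_V y w inj_mod_lin[OF prime, of 1 1] in auto)
  also have "\<dots> = NN y w" unfolding NN_def using image_mod_lin[OF prime, of 1 1] by simp
  finally show ?thesis .
qed

lemma NN_mult:
  assumes y: "y \<in> carrier G" and u: "u \<in> V" and w: "w \<in> V"
  shows "NN y (u \<otimes> w) = NN y u \<otimes> NN y w"
proof -
  have "NN y (u \<otimes> w) = finprod (G\<lparr>carrier := V\<rparr>) (\<lambda>k. cj (y [^] k) u \<otimes>\<^bsub>G\<lparr>carrier := V\<rparr>\<^esub> cj (y [^] k) w) {..<p}"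
    unfolding NN_def using cj_mult y Vcar u w by simp
  also have "\<dots> = NN y u \<otimes> NN y w" unfolding NN_def
    by (subst VG.finprod_multf) (use cj_V y u w in auto)
  finally show ?thesis .
qed

lemma NN_one: "y \<in> carrier G \<Longrightarrow> NN y \<one> = \<one>"
proof -
  assume y: "y \<in> carrier G"
  have "NN y \<one> = finprod (G\<lparr>carrier := V\<rparr>) (\<lambda>k. \<one>\<^bsub>G\<lparr>carrier := V\<rparr>\<^esub>) {..<p}"
    unfolding NN_def using cj_one y by simp
  also have "\<dots> = \<one>" using VG.finprod_one by simp
  finally show ?thesis .
qed

lemma NN_inv:
  assumes y: "y \<in> carrier G" and w: "w \<in> V"
  shows "NN y (inv w) = inv (NN y w)"
proof -
  have iw: "inv w \<in> V" using subgroup.m_inv_closed[OF Vs w] .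
  have "NN y (inv w) \<otimes> NN y w = \<one>"
    using NN_mult[OF y iw w] NN_one[OF y] Vcar w by simp
  then have "inv (NN y w) = NN y (inv w)"
    by (rule inv_equality) (use NN_V[OF y iw] NN_V[OF y w] Vcar in auto)
  then show ?thesis by simp
qed

lemma NN_of_fixed:
  assumes y: "y \<in> carrier G" and w: "w \<in> V" and wy: "w \<otimes> y = y \<otimes> w"
  shows "NN y w = w [^] p"
proof -
  have wc: "w \<in> carrier G" using Vcar w .
  have "NN y w = finprod (G\<lparr>carrier := V\<rparr>) (\<lambda>k. w) {..<p}"
    unfolding NN_def
  proof (rule VG.finprod_cong')
    fix k assume "k \<in> {..<p}"
    have "w \<otimes> y [^] k = y [^] k \<otimes> w" using comm_pow[OF wc y wy] .
    then show "cj (y [^] k) w = w" using cj_fix2 y wc by simp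
  qed (use w in auto)
  also have "\<dots> = w [^] p" using VG.finprod_const[of w "{..<p}"] w nat_pow_consistent by simp
  finally show ?thesis .
qed

lemma NN_pow:
  assumes y: "y \<in> carrier G" and w: "w \<in> V"
  shows "NN y (w [^] (n::nat)) = NN y w [^] n"
proof (induct n)
  case 0 then show ?case using NN_one y by simp
next
  case (Suc n)
  have wn: "w [^] n \<in> V" using w Vs by (metis nat_pow_consistent subgroup.subgroup_is_group[OF Vs is_group] group.is_monoid monoid.nat_pow_closed partial_object.select_convs(1) partial_object.surjective partial_object.update_convs(1))
  have "NN y (w [^] Suc n) = NN y (w [^] n \<otimes> w)" by simp
  also have "\<dots> = NN y (w [^] n) \<otimes> NN y w" using NN_mult[OF y wn w] .
  also have "\<dots> = NN y w [^] Suc n" using Suc by simp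
  finally show ?case .
qed

end

context keyctx begin

lemma finprod_swap:
  assumes S: "finite S" and T: "finite T"
  shows "(\<And>j k. j \<in> S \<Longrightarrow> k \<in> T \<Longrightarrow> f j k \<in> V) \<Longrightarrow>
    finprod (G\<lparr>carrier := V\<rparr>) (\<lambda>j. finprod (G\<lparr>carrier := V\<rparr>) (f j) T) S =
    finprod (G\<lparr>carrier := V\<rparr>) (\<lambda>k. finprod (G\<lparr>carrier := V\<rparr>) (\<lambda>j. f j k) S) T"
  using S
proof (induct S rule: finite_induct)
  case empty
  then show ?case by simp
next
  case (insert x F)
  have fx: "f x \<in> T \<rightarrow> V" using insert by auto
  have fBc: "finprod (G\<lparr>carrier := V\<rparr>) (f j) T \<in> V" if "j \<in> insert x F" for j
  proof -
    have "f j \<in> T \<rightarrow> V" using insert.prems that by auto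
    then show ?thesis by (rule VG_closed)
  qed
  have fF: "(\<lambda>k. finprod (G\<lparr>carrier := V\<rparr>) (\<lambda>j. f j k) F) \<in> T \<rightarrow> V"
  proof
    fix k assume "k \<in> T"
    then have "(\<lambda>j. f j k) \<in> F \<rightarrow> V" using insert.prems by auto
    then show "finprod (G\<lparr>carrier := V\<rparr>) (\<lambda>j. f j k) F \<in> V" by (rule VG_closed)
  qed
  have "finprod (G\<lparr>carrier := V\<rparr>) (\<lambda>j. finprod (G\<lparr>carrier := V\<rparr>) (f j) T) (insert x F)
      = finprod (G\<lparr>carrier := V\<rparr>) (f x) T \<otimes> finprod (G\<lparr>carrier := V\<rparr>) (\<lambda>j. finprod (G\<lparr>carrier := V\<rparr>) (f j) T) F"
    using insert fBc by (subst VG.finprod_insert) auto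
  also have "\<dots> = finprod (G\<lparr>carrier := V\<rparr>) (f x) T \<otimes> finprod (G\<lparr>carrier := V\<rparr>) (\<lambda>k. finprod (G\<lparr>carrier := V\<rparr>) (\<lambda>j. f j k) F) T"
    using insert by simp
  also have "\<dots> = finprod (G\<lparr>carrier := V\<rparr>) (\<lambda>k. f x k \<otimes>\<^bsub>G\<lparr>carrier := V\<rparr>\<^esub> finprod (G\<lparr>carrier := V\<rparr>) (\<lambda>j. f j k) F) T"
    using VG.finprod_multf[of "f x" T "\<lambda>k. finprod (G\<lparr>carrier := V\<rparr>) (\<lambda>j. f j k) F"] fx fF by simp
  also have "\<dots> = finprod (G\<lparr>carrier := V\<rparr>) (\<lambda>k. finprod (G\<lparr>carrier := V\<rparr>) (\<lambda>j. f j k) (insert x F)) T"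
  proof (rule VG.finprod_cong')
    fix k assume k: "k \<in> T"
    show "f x k \<otimes>\<^bsub>G\<lparr>carrier := V\<rparr>\<^esub> finprod (G\<lparr>carrier := V\<rparr>) (\<lambda>j. f j k) F =
          finprod (G\<lparr>carrier := V\<rparr>) (\<lambda>j. f j k) (insert x F)"
      using insert k by (subst VG.finprod_insert) auto
  next
    show "(\<lambda>k. finprod (G\<lparr>carrier := V\<rparr>) (\<lambda>j. f j k) (insert x F)) \<in> T \<rightarrow> carrier (G\<lparr>carrier := V\<rparr>)"
    proof
      fix k assume "k \<in> T"
      then have "(\<lambda>j. f j k) \<in> insert x F \<rightarrow> V" using insert.prems by auto
      then have "finprod (G\<lparr>carrier := V\<rparr>) (\<lambda>j. f j k) (insert x F) \<in> V" by (rule VG_closed)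
      then show "finprod (G\<lparr>carrier := V\<rparr>) (\<lambda>j. f j k) (insert x F) \<in> carrier (G\<lparr>carrier := V\<rparr>)"
        by simp
    qed
  qed simp
  finally show ?case .
qed

lemma acj_pow: "(a \<otimes> c [^] (j::nat)) [^] (k::nat) = a [^] k \<otimes> c [^] (j * k)"
proof -
  have "a \<otimes> c [^] j = c [^] j \<otimes> a" using comm_pow[OF ac] .
  then have "(a \<otimes> c [^] j) [^] k = a [^] k \<otimes> (c [^] j) [^] k"
    using pow_mult_distrib[OF _ _ _, of a "c [^] j" k] ac by simp
  then show ?thesis using ac by (simp add: nat_pow_pow)
qed

lemma acj_p: "(a \<otimes> c [^] (j::nat)) [^] p = \<one>"
proof -
  have "(a \<otimes> c [^] j) [^] p = a [^] p \<otimes> c [^] (j * p)" by (rule acj_pow)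
  also have "c [^] (j * p) = (c [^] p) [^] j" using ac by (simp add: nat_pow_pow mult.commute)
  finally show ?thesis using ap cp by simp
qed

lemma double_sum:
  assumes w: "w \<in> V" and Nw: "NN c w = \<one>"
  shows "finprod (G\<lparr>carrier := V\<rparr>) (\<lambda>j. NN (a \<otimes> c [^] j) w) {..<p} = w [^] p"
proof -
  have wc: "w \<in> carrier G" using Vcar w .
  define F where "F k m = cj (c [^] m) (cj (a [^] k) w)" for k m :: nat
  have FV: "F k m \<in> V" for k m unfolding F_def using cj_V ac w by simp
  have step1: "NN (a \<otimes> c [^] j) w = finprod (G\<lparr>carrier := V\<rparr>) (\<lambda>k. F k ((j * k) mod p)) {..<p}" for j :: nat
    unfolding NN_def
  proof (rule VG.finprod_cong')
    fix k :: nat assume "k \<in> {..<p}"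
    have "cj ((a \<otimes> c [^] j) [^] k) w = cj (a [^] k \<otimes> c [^] (j * k)) w" using acj_pow by simp
    also have "\<dots> = cj (c [^] (j * k)) (cj (a [^] k) w)" using cj_cj ac wc by simp
    also have "\<dots> = F k ((j * k) mod p)" unfolding F_def using c_mod[of "j * k"] by simp
    finally show "cj ((a \<otimes> c [^] j) [^] k) w = F k ((j * k) mod p)" .
  qed (use FV in auto)
  have inner: "finprod (G\<lparr>carrier := V\<rparr>) (\<lambda>j. F k ((j * k) mod p)) {..<p} = (if k = 0 then w [^] p else \<one>)"
    if k: "k < p" for k
  proof (cases "k = 0")
    case True
    have "F 0 0 = w" unfolding F_def using cj_def wc by simp
    then have "finprod (G\<lparr>carrier := V\<rparr>) (\<lambda>j. F k ((j * k) mod p)) {..<p} = finprod (G\<lparr>carrier := V\<rparr>) (\<lambda>j. w) {..<p}"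
      using True by simp
    also have "\<dots> = w [^] p" using VG.finprod_const[of w "{..<p}"] w nat_pow_consistent by simp
    finally show ?thesis using True by simp
  next
    case False
    have cop: "coprime k p"
    proof -
      have "\<not> p dvd k" using nat_dvd_not_less[of k p] False k by simp
      then have "coprime p k" by (rule prime_imp_coprime[OF prime])
      then show ?thesis by (simp add: coprime_commute)
    qed
    have "finprod (G\<lparr>carrier := V\<rparr>) (\<lambda>j. F k ((j * k) mod p)) {..<p}
        = finprod (G\<lparr>carrier := V\<rparr>) (\<lambda>j. F k ((j * k + 0) mod p)) {..<p}" by simp
    also have "\<dots> = finprod (G\<lparr>carrier := V\<rparr>) (F k) ((\<lambda>j. (j * k + 0) mod p) ` {..<p})"
      by (rule VG.finprod_reindex[symmetric]) (use FV inj_mod_lin[OF prime cop, of 0] in auto)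
    also have "\<dots> = finprod (G\<lparr>carrier := V\<rparr>) (F k) {..<p}" using image_mod_lin[OF prime cop, of 0] by simp
    also have "\<dots> = finprod (G\<lparr>carrier := V\<rparr>) (\<lambda>m. cj (a [^] k) (cj (c [^] m) w)) {..<p}"
    proof (rule VG.finprod_cong')
      fix m assume "m \<in> {..<p}"
      have "F k m = cj (a [^] k \<otimes> c [^] m) w" unfolding F_def using cj_cj ac wc by simp
      also have "a [^] k \<otimes> c [^] m = c [^] m \<otimes> a [^] k"
        by (rule pow_comm2[OF ac])
      also have "cj (c [^] m \<otimes> a [^] k) w = cj (a [^] k) (cj (c [^] m) w)" using cj_cj ac wc by simp
      finally show "F k m = cj (a [^] k) (cj (c [^] m) w)" .
    qed (use cj_V ac w in auto)
    also have "\<dots> = cj (a [^] k) (NN c w)" unfolding NN_def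
      by (rule cj_finprod[symmetric]) (use cj_V ac w in auto)
    also have "\<dots> = \<one>" using Nw cj_one ac by simp
    finally show ?thesis using False by simp
  qed
  have "finprod (G\<lparr>carrier := V\<rparr>) (\<lambda>j. NN (a \<otimes> c [^] j) w) {..<p}
      = finprod (G\<lparr>carrier := V\<rparr>) (\<lambda>j. finprod (G\<lparr>carrier := V\<rparr>) (\<lambda>k. F k ((j * k) mod p)) {..<p}) {..<p}"
    using step1 by simp
  also have "\<dots> = finprod (G\<lparr>carrier := V\<rparr>) (\<lambda>k. finprod (G\<lparr>carrier := V\<rparr>) (\<lambda>j. F k ((j * k) mod p)) {..<p}) {..<p}"
    using finprod_swap[of "{..<p}" "{..<p}" "\<lambda>j k. F k ((j * k) mod p)"] FV by simp
  also have "\<dots> = finprod (G\<lparr>carrier := V\<rparr>) (\<lambda>k. if k = 0 then w [^] p else \<one>) {..<p}"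
  proof (rule VG.finprod_cong')
    fix k assume "k \<in> {..<p}"
    then show "finprod (G\<lparr>carrier := V\<rparr>) (\<lambda>j. F k ((j * k) mod p)) {..<p} = (if k = 0 then w [^] p else \<one>)"
      using inner by simp
  next
    have "w [^] p \<in> V" using w nat_pow_consistent VG.nat_pow_closed by simp
    moreover have "\<one> \<in> V" using subgroup.one_closed[OF Vs] .
    ultimately show "(\<lambda>k. if k = 0 then w [^] p else \<one>) \<in> {..<p} \<rightarrow> carrier (G\<lparr>carrier := V\<rparr>)"
      by (simp add: Pi_def)
  qed simp
  also have "\<dots> = w [^] p"
  proof -
    have wp: "w [^] p \<in> V" using w nat_pow_consistent VG.nat_pow_closed by simp
    have e: "{..<p} = insert 0 ({..<p} - {0})" using pgt0 by auto
    have "finprod (G\<lparr>carrier := V\<rparr>) (\<lambda>k. if k = 0 then w [^] p else \<one>) (insert 0 ({..<p} - {0}))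
       = w [^] p \<otimes> finprod (G\<lparr>carrier := V\<rparr>) (\<lambda>k. if k = 0 then w [^] p else \<one>) ({..<p} - {0})"
      using wp subgroup.one_closed[OF Vs] by (subst VG.finprod_insert) (auto simp: Pi_def)
    also have "finprod (G\<lparr>carrier := V\<rparr>) (\<lambda>k. if k = 0 then w [^] p else \<one>) ({..<p} - {0}) = \<one>"
      using VG.finprod_one_eqI[of "{..<p} - {0}" "\<lambda>k. if k = 0 then w [^] p else \<one>"] by simp
    finally show ?thesis using e wp Vcar by simp
  qed
  finally show ?thesis .
qed

end

context keyctx begin

lemma comm_of_pow:
  assumes w: "w \<in> carrier G" and cop: "coprime (ord w) p" and wp: "w [^] p \<otimes> c = c \<otimes> w [^] p"
  shows "w \<otimes> c = c \<otimes> w"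
proof -
  have "p \<noteq> 0" using pgt0 by simp
  then obtain x y where xy: "p * x = ord w * y + gcd p (ord w)" using bezout_nat by blast
  have "gcd p (ord w) = 1" using cop by (simp add: coprime_iff_gcd_eq_1 gcd.commute)
  then have xy1: "p * x = ord w * y + 1" using xy by simp
  have "(w [^] p) [^] x = w [^] (ord w * y + 1)" using w xy1 by (simp add: nat_pow_pow)
  also have "\<dots> = w [^] (ord w * y) \<otimes> w [^] (1::nat)" using w by (simp add: nat_pow_mult)
  also have "w [^] (ord w * y) = \<one>" using pow_eq_id[OF w] by simp
  also have "\<one> \<otimes> w [^] (1::nat) = w" using w by simp
  finally have e: "(w [^] p) [^] x = w" .
  have "c \<otimes> (w [^] p) [^] x = (w [^] p) [^] x \<otimes> c"
    by (rule comm_pow) (use w ac wp in auto)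
  then show ?thesis using e by simp
qed

lemma prod_comm_c:
  assumes S: "finite S"
  shows "f \<in> S \<rightarrow> V \<Longrightarrow> (\<And>k. k \<in> S \<Longrightarrow> f k \<otimes> c = c \<otimes> f k) \<Longrightarrow>
    finprod (G\<lparr>carrier := V\<rparr>) f S \<otimes> c = c \<otimes> finprod (G\<lparr>carrier := V\<rparr>) f S"
  using S
proof (induct S rule: finite_induct)
  case empty then show ?case using ac by simp
next
  case (insert x F)
  have fF: "f \<in> F \<rightarrow> V" and fx: "f x \<in> V" using insert.prems by auto
  have P: "finprod (G\<lparr>carrier := V\<rparr>) f F \<in> V" using VG_closed[OF fF] .
  have e: "finprod (G\<lparr>carrier := V\<rparr>) f (insert x F) = f x \<otimes> finprod (G\<lparr>carrier := V\<rparr>) f F"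
    using insert fF fx by simp
  have h1: "c \<otimes> f x = f x \<otimes> c" using insert.prems by simp
  have h2: "c \<otimes> finprod (G\<lparr>carrier := V\<rparr>) f F = finprod (G\<lparr>carrier := V\<rparr>) f F \<otimes> c"
    using insert by simp
  have "c \<otimes> (f x \<otimes> finprod (G\<lparr>carrier := V\<rparr>) f F) = (f x \<otimes> finprod (G\<lparr>carrier := V\<rparr>) f F) \<otimes> c"
    by (rule comm_mult) (use ac Vcar fx P h1 h2 in auto)
  then show ?case using e by simp
qed

theorem key:
  assumes v: "v \<in> V"
  shows "v \<otimes> c = c \<otimes> v"
proof -
  have vc: "v \<in> carrier G" using Vcar v .
  define n where "n = NN c v"
  have nV: "n \<in> V" unfolding n_def using NN_V ac v by simp
  have nc: "n \<in> carrier G" using Vcar nV .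
  have ncomm: "n \<otimes> c = c \<otimes> n"
    using cj_fix[OF _ nc] NN_fixed[OF _ cp v] ac unfolding n_def by simp
  have vpV: "v [^] p \<in> V" using v nat_pow_consistent VG.nat_pow_closed by simp
  have inV: "inv n \<in> V" using subgroup.m_inv_closed[OF Vs nV] .
  define w where "w = v [^] p \<otimes> inv n"
  have wV: "w \<in> V" unfolding w_def using subgroup.m_closed[OF Vs vpV inV] .
  have wc: "w \<in> carrier G" using Vcar wV .
  have "NN c w = NN c (v [^] p) \<otimes> NN c (inv n)" unfolding w_def using NN_mult[OF _ vpV inV] ac by simp
  also have "\<dots> = n [^] p \<otimes> inv (NN c n)" using NN_pow[OF _ v, of c p] NN_inv[OF _ nV] ac unfolding n_def by simp
  also have "NN c n = n [^] p" using NN_of_fixed[OF _ nV ncomm] ac by simp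
  finally have Nw: "NN c w = \<one>" using nc by simp
  have zc: "NN (a \<otimes> c [^] j) w \<otimes> c = c \<otimes> NN (a \<otimes> c [^] j) w" for j :: nat
  proof -
    have zV: "NN (a \<otimes> c [^] j) w \<in> V" using NN_V acA wV by simp
    have "cj (a \<otimes> c [^] j) (NN (a \<otimes> c [^] j) w) = NN (a \<otimes> c [^] j) w"
      by (rule NN_fixed[OF acA acj_p wV])
    then have "NN (a \<otimes> c [^] j) w \<otimes> (a \<otimes> c [^] j) = (a \<otimes> c [^] j) \<otimes> NN (a \<otimes> c [^] j) w"
      using cj_fix[OF acA] Vcar zV by blast
    then show ?thesis using K2c[OF zV] by blast
  qed
  have "finprod (G\<lparr>carrier := V\<rparr>) (\<lambda>j. NN (a \<otimes> c [^] j) w) {..<p} \<otimes> c = c \<otimes> finprod (G\<lparr>carrier := V\<rparr>) (\<lambda>j. NN (a \<otimes> c [^] j) w) {..<p}"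
    by (rule prod_comm_c) (use zc NN_V acA wV in auto)
  then have "w [^] p \<otimes> c = c \<otimes> w [^] p" using double_sum[OF wV Nw] by simp
  then have wcomm: "w \<otimes> c = c \<otimes> w" using comm_of_pow[OF wc] Vc wV by blast
  have "v [^] p = w \<otimes> n" unfolding w_def using vc nc by (simp add: m_assoc)
  moreover have "c \<otimes> (w \<otimes> n) = (w \<otimes> n) \<otimes> c"
    by (rule comm_mult) (use ac wc nc wcomm ncomm in auto)
  ultimately have "v [^] p \<otimes> c = c \<otimes> v [^] p" by simp
  then show ?thesis using comm_of_pow[OF vc] Vc v by blast
qed

end

context group begin

lemma ord_dvd_card_sub:
  assumes K: "subgroup K G" and u: "u \<in> K"
  shows "ord u dvd card K"
proof -
  have uc: "u \<in> carrier G" using subgroup.mem_carrier[OF K u] .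
  have gs: "subgroup (generate G {u}) G" by (rule generate_is_subgroup) (use uc in auto)
  have gK: "generate G {u} \<subseteq> K" by (rule generate_subgroup_incl) (use K u in auto)
  have sub: "subgroup (generate G {u}) (G\<lparr>carrier := K\<rparr>)" by (rule subgroup_incl[OF gs K gK])
  have grp: "group (G\<lparr>carrier := K\<rparr>)" using subgroup.subgroup_is_group[OF K is_group] .
  have "card (rcosets\<^bsub>G\<lparr>carrier := K\<rparr>\<^esub> (generate G {u})) * card (generate G {u}) = order (G\<lparr>carrier := K\<rparr>)"
    by (rule group.lagrange[OF grp sub])
  moreover have "order (G\<lparr>carrier := K\<rparr>) = card K" unfolding order_def by simp
  ultimately have eq: "card (rcosets\<^bsub>G\<lparr>carrier := K\<rparr>\<^esub> (generate G {u})) * card (generate G {u}) = card K" by simp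
  have "card (generate G {u}) dvd card K" unfolding eq[symmetric] by (rule dvd_triv_right)
  then show ?thesis using generate_pow_card[OF uc] by simp
qed

lemma coprime_of_sub:
  assumes K: "subgroup K G" and u: "u \<in> K" and cop: "\<not> p dvd card K" and pr: "Factorial_Ring.prime (p::nat)"
  shows "coprime (ord u) p"
proof -
  have "\<not> p dvd ord u" using ord_dvd_card_sub[OF K u] cop dvd_trans by blast
  then have "coprime p (ord u)" by (rule prime_imp_coprime[OF pr])
  then show ?thesis by (simp add: coprime_commute)
qed

lemma quotient_step:
  assumes pr: "Factorial_Ring.prime (p::nat)"
  and Anorm: "\<forall>g\<in>carrier G. \<forall>x\<in>A. g \<otimes> x \<otimes> inv g \<in> A" and AC: "A \<subseteq> carrier G"
  and Ap: "\<forall>x\<in>A. \<forall>y\<in>A. \<exists>k. (x \<otimes> y) [^] (p^k) = \<one>"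
  and Wn: "W \<lhd> G" and Un: "U \<lhd> G"
  and comm: "\<forall>u\<in>U. \<forall>v\<in>U. u \<otimes> v \<otimes> inv u \<otimes> inv v \<in> W"
  and Uc: "\<forall>u\<in>U. coprime (ord u) p"
  and ac: "a \<in> carrier G" "c \<in> carrier G" "a \<otimes> c = c \<otimes> a"
  and ap: "a [^] p = \<one>" and cp: "c [^] p = \<one>"
  and aA: "\<And>m::nat. a \<otimes> c [^] m \<in> A"
  and u: "u \<in> U"
  shows "(u \<otimes> c) \<otimes> inv (c \<otimes> u) \<in> W"
proof -
  define h where "h = (\<lambda>x. W #> x)"
  interpret Wn: normal W G using Wn .
  have hom: "group_hom G (G Mod W) h"
    unfolding group_hom_def group_hom_axioms_def h_def
    using is_group Wn.factorgroup_is_group Wn.r_coset_hom_Mod by simp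
  interpret hom: group_hom G "G Mod W" h using hom .
  have surj: "h ` carrier G = carrier (G Mod W)"
    unfolding h_def by (auto simp: FactGroup_def RCOSETS_def)
  have Us: "subgroup U G" using Un by (rule normal.axioms(1))
  have Ucar: "x \<in> U \<Longrightarrow> x \<in> carrier G" for x using subgroup.mem_carrier[OF Us] .
  have Wsub: "subgroup W G" using Wn by (rule normal.axioms(1))
  have heq: "h x = h y" if "x \<in> carrier G" "y \<in> carrier G" "x \<otimes> inv y \<in> W" for x y
  proof -
    have "x \<in> W #> y" using subgroup.rcos_module_rev[OF Wsub is_group that(2) that(1) that(3)] .
    then have "W #> y = W #> x" by (rule repr_independence) (use that Wsub in auto)
    then show ?thesis unfolding h_def by simp
  qed
  have kc: "keyctx (G Mod W) p (h ` A) (h ` U) (h a) (h c)"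
  proof (unfold keyctx_def keyctx_axioms_def, intro conjI)
    show "group (G Mod W)" using Wn.factorgroup_is_group .
    show "Factorial_Ring.prime p" using pr .
    show "\<forall>g\<in>carrier (G Mod W). \<forall>x\<in>h ` A. g \<otimes>\<^bsub>G Mod W\<^esub> x \<otimes>\<^bsub>G Mod W\<^esub> inv\<^bsub>G Mod W\<^esub> g \<in> h ` A"
    proof (intro ballI)
      fix g x assume g: "g \<in> carrier (G Mod W)" and x: "x \<in> h ` A"
      obtain g0 where g0: "g0 \<in> carrier G" "g = h g0" using g surj by auto
      obtain x0 where x0: "x0 \<in> A" "x = h x0" using x by auto
      have x0c: "x0 \<in> carrier G" using x0 AC by auto
      have "g \<otimes>\<^bsub>G Mod W\<^esub> x \<otimes>\<^bsub>G Mod W\<^esub> inv\<^bsub>G Mod W\<^esub> g = h (g0 \<otimes> x0 \<otimes> inv g0)"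
        using g0 x0 x0c by simp
      then show "g \<otimes>\<^bsub>G Mod W\<^esub> x \<otimes>\<^bsub>G Mod W\<^esub> inv\<^bsub>G Mod W\<^esub> g \<in> h ` A"
        using Anorm g0 x0 by auto
    qed
    show "h ` A \<subseteq> carrier (G Mod W)" using AC by auto
    show "\<forall>x\<in>h ` A. \<forall>y\<in>h ` A. \<exists>k. (x \<otimes>\<^bsub>G Mod W\<^esub> y) [^]\<^bsub>G Mod W\<^esub> (p ^ k) = \<one>\<^bsub>G Mod W\<^esub>"
    proof (intro ballI)
      fix x y assume x: "x \<in> h ` A" and y: "y \<in> h ` A"
      obtain x0 where x0: "x0 \<in> A" "x = h x0" using x by auto
      obtain y0 where y0: "y0 \<in> A" "y = h y0" using y by auto
      obtain k where k: "(x0 \<otimes> y0) [^] (p^k) = \<one>" using Ap x0 y0 by blast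
      have x0c: "x0 \<in> carrier G" and y0c: "y0 \<in> carrier G" using x0 y0 AC by auto
      have "x \<otimes>\<^bsub>G Mod W\<^esub> y = h (x0 \<otimes> y0)" unfolding x0(2) y0(2)
        by (rule hom.hom_mult[symmetric]) (use x0c y0c in auto)
      then have "(x \<otimes>\<^bsub>G Mod W\<^esub> y) [^]\<^bsub>G Mod W\<^esub> (p ^ k) = h (x0 \<otimes> y0) [^]\<^bsub>G Mod W\<^esub> (p ^ k)"
        by (simp only:)
      also have "\<dots> = h ((x0 \<otimes> y0) [^] (p^k))"
        by (rule hom.hom_nat_pow[symmetric]) (use x0c y0c in auto)
      also have "\<dots> = \<one>\<^bsub>G Mod W\<^esub>" using k by simp
      finally show "\<exists>k. (x \<otimes>\<^bsub>G Mod W\<^esub> y) [^]\<^bsub>G Mod W\<^esub> (p ^ k) = \<one>\<^bsub>G Mod W\<^esub>" by blast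
    qed
    show "h ` U \<lhd> G Mod W" using normal.surj_hom_normal_subgroup[OF Un hom surj] .
    show "\<forall>v\<in>h ` U. coprime (group.ord (G Mod W) v) p"
    proof
      fix v assume v: "v \<in> h ` U"
      obtain u0 where u0: "u0 \<in> U" "v = h u0" using v by auto
      have u0c: "u0 \<in> carrier G" using Ucar u0 by simp
      have "v [^]\<^bsub>G Mod W\<^esub> ord u0 = h (u0 [^] ord u0)" unfolding u0(2) by (rule hom.hom_nat_pow[symmetric]) (use u0c in auto)
      also have "\<dots> = \<one>\<^bsub>G Mod W\<^esub>" using u0c by simp
      finally have "group.ord (G Mod W) v dvd ord u0"
        using group.pow_eq_id[OF Wn.factorgroup_is_group] v u0 u0c by auto
      moreover have "coprime (ord u0) p" using Uc u0 by simp
      ultimately show "coprime (group.ord (G Mod W) v) p" using coprime_imp_coprime dvd_trans by blast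
    qed
    show "\<forall>x\<in>h ` U. \<forall>y\<in>h ` U. x \<otimes>\<^bsub>G Mod W\<^esub> y = y \<otimes>\<^bsub>G Mod W\<^esub> x"
    proof (intro ballI)
      fix x y assume x: "x \<in> h ` U" and y: "y \<in> h ` U"
      obtain x0 where x0: "x0 \<in> U" "x = h x0" using x by auto
      obtain y0 where y0: "y0 \<in> U" "y = h y0" using y by auto
      have xc: "x0 \<in> carrier G" and yc: "y0 \<in> carrier G" using Ucar x0 y0 by auto
      have "(y0 \<otimes> x0) \<otimes> inv (x0 \<otimes> y0) = y0 \<otimes> x0 \<otimes> inv y0 \<otimes> inv x0"
        using xc yc by (simp add: inv_mult_group m_assoc)
      also have "\<dots> \<in> W" using comm x0 y0 by blast
      finally have "h (y0 \<otimes> x0) = h (x0 \<otimes> y0)" by (rule heq[rotated 2]) (use xc yc in auto)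
      have "x \<otimes>\<^bsub>G Mod W\<^esub> y = h (x0 \<otimes> y0)" unfolding x0(2) y0(2)
        by (rule hom.hom_mult[symmetric]) (use xc yc in auto)
      also have "\<dots> = h (y0 \<otimes> x0)" using \<open>h (y0 \<otimes> x0) = h (x0 \<otimes> y0)\<close> by simp
      also have "\<dots> = y \<otimes>\<^bsub>G Mod W\<^esub> x" unfolding x0(2) y0(2)
        by (rule hom.hom_mult) (use xc yc in auto)
      finally show "x \<otimes>\<^bsub>G Mod W\<^esub> y = y \<otimes>\<^bsub>G Mod W\<^esub> x" .
    qed
    show "h a \<in> carrier (G Mod W)" using ac by simp
    show "h c \<in> carrier (G Mod W)" using ac by simp
    show "h a \<otimes>\<^bsub>G Mod W\<^esub> h c = h c \<otimes>\<^bsub>G Mod W\<^esub> h a"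
    proof -
      have "h a \<otimes>\<^bsub>G Mod W\<^esub> h c = h (a \<otimes> c)" by (rule hom.hom_mult[symmetric]) (use ac in auto)
      also have "\<dots> = h (c \<otimes> a)" using ac(3) by simp
      also have "\<dots> = h c \<otimes>\<^bsub>G Mod W\<^esub> h a" by (rule hom.hom_mult) (use ac in auto)
      finally show ?thesis .
    qed
    show "h a [^]\<^bsub>G Mod W\<^esub> p = \<one>\<^bsub>G Mod W\<^esub>"
    proof -
      have "h a [^]\<^bsub>G Mod W\<^esub> p = h (a [^] p)" by (rule hom.hom_nat_pow[symmetric]) (use ac in auto)
      then show ?thesis using ap by simp
    qed
    show "h c [^]\<^bsub>G Mod W\<^esub> p = \<one>\<^bsub>G Mod W\<^esub>"
    proof -
      have "h c [^]\<^bsub>G Mod W\<^esub> p = h (c [^] p)" by (rule hom.hom_nat_pow[symmetric]) (use ac in auto)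
      then show ?thesis using cp by simp
    qed
    show "\<forall>m::nat. h a \<otimes>\<^bsub>G Mod W\<^esub> h c [^]\<^bsub>G Mod W\<^esub> m \<in> h ` A"
    proof
      fix m :: nat
      have "h c [^]\<^bsub>G Mod W\<^esub> m = h (c [^] m)" by (rule hom.hom_nat_pow[symmetric]) (use ac in auto)
      moreover have "h a \<otimes>\<^bsub>G Mod W\<^esub> h (c [^] m) = h (a \<otimes> c [^] m)" by (rule hom.hom_mult[symmetric]) (use ac in auto)
      ultimately have "h a \<otimes>\<^bsub>G Mod W\<^esub> h c [^]\<^bsub>G Mod W\<^esub> m = h (a \<otimes> c [^] m)" by simp
      then show "h a \<otimes>\<^bsub>G Mod W\<^esub> h c [^]\<^bsub>G Mod W\<^esub> m \<in> h ` A" using aA by simp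
    qed
  qed
  have "h u \<otimes>\<^bsub>G Mod W\<^esub> h c = h c \<otimes>\<^bsub>G Mod W\<^esub> h u"
    using keyctx.key[OF kc] u by blast
  moreover have "h u \<otimes>\<^bsub>G Mod W\<^esub> h c = h (u \<otimes> c)" by (rule hom.hom_mult[symmetric]) (use Ucar u ac in auto)
  moreover have "h c \<otimes>\<^bsub>G Mod W\<^esub> h u = h (c \<otimes> u)" by (rule hom.hom_mult[symmetric]) (use Ucar u ac in auto)
  ultimately have e: "h (u \<otimes> c) = h (c \<otimes> u)" by simp
  have uc: "u \<in> carrier G" using Ucar u .
  have "u \<otimes> c \<in> W #> (c \<otimes> u)"
  proof -
    have "u \<otimes> c \<in> W #> (u \<otimes> c)" using rcos_self Wsub uc ac by simp
    then show ?thesis using e unfolding h_def by simp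
  qed
  then show ?thesis using subgroup.rcos_module_imp[OF Wsub is_group] uc ac by simp
qed

lemma stab:
  assumes pr: "Factorial_Ring.prime (p::nat)"
  and Ws: "subgroup W G" and Us: "subgroup U G" and WU: "W \<subseteq> U"
  and Uc: "\<forall>u\<in>U. coprime (ord u) p"
  and c: "c \<in> carrier G" and cp: "c [^] p = \<one>"
  and Wc: "\<forall>w\<in>W. w \<otimes> c = c \<otimes> w"
  and step: "\<forall>u\<in>U. (u \<otimes> c) \<otimes> inv (c \<otimes> u) \<in> W"
  and u: "u \<in> U"
  shows "u \<otimes> c = c \<otimes> u"
proof -
  have uc: "u \<in> carrier G" using subgroup.mem_carrier[OF Us u] .
  define t where "t = (u \<otimes> c) \<otimes> inv (c \<otimes> u)"
  have tW: "t \<in> W" unfolding t_def using step u by blast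
  have tc: "t \<in> carrier G" using subgroup.mem_carrier[OF Ws tW] .
  have tcomm: "t \<otimes> c = c \<otimes> t" using Wc tW by blast
  have base: "u \<otimes> c = t \<otimes> (c \<otimes> u)" unfolding t_def using uc c by (simp add: m_assoc)
  have ind: "u \<otimes> c [^] n = t [^] n \<otimes> c [^] n \<otimes> u" for n :: nat
  proof (induct n)
    case 0 then show ?case using uc by simp
  next
    case (Suc n)
    have "u \<otimes> c [^] Suc n = (u \<otimes> c [^] n) \<otimes> c" using uc c by (simp add: m_assoc)
    also have "\<dots> = t [^] n \<otimes> c [^] n \<otimes> (u \<otimes> c)" using Suc uc c tc by (simp add: m_assoc)
    also have "\<dots> = t [^] n \<otimes> c [^] n \<otimes> (t \<otimes> (c \<otimes> u))" using base by simp
    also have "\<dots> = t [^] n \<otimes> (c [^] n \<otimes> t) \<otimes> (c \<otimes> u)" using uc c tc by (simp add: m_assoc)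
    also have "c [^] n \<otimes> t = t \<otimes> c [^] n"
    proof -
      have "t \<otimes> c [^] n = c [^] n \<otimes> t"
      proof (induct n)
        case 0 then show ?case using tc by simp
      next
        case (Suc n)
        have "t \<otimes> c [^] Suc n = (t \<otimes> c [^] n) \<otimes> c" using tc c by (simp add: m_assoc)
        also have "\<dots> = c [^] n \<otimes> (t \<otimes> c)" using Suc tc c by (simp add: m_assoc)
        also have "\<dots> = c [^] n \<otimes> (c \<otimes> t)" using tcomm by simp
        also have "\<dots> = c [^] Suc n \<otimes> t" using tc c by (simp add: m_assoc)
        finally show ?case .
      qed
      then show ?thesis by simp
    qed
    also have "t [^] n \<otimes> (t \<otimes> c [^] n) \<otimes> (c \<otimes> u) = t [^] Suc n \<otimes> c [^] Suc n \<otimes> u"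
      using uc c tc by (simp add: m_assoc nat_pow_mult[symmetric])
    finally show ?case .
  qed
  have "u = t [^] p \<otimes> u" using ind[of p] cp uc tc by simp
  then have "t [^] p = \<one>" using uc tc by (metis l_one nat_pow_closed one_closed right_cancel)
  then have "t [^] (p ^ 1) = \<one>" by simp
  then have "t = \<one>" using coprime_pow_one[OF tc] Uc WU tW by blast
  then show ?thesis using base uc c by simp
qed

end

lemma step_exists: "\<not> P (0::nat) \<Longrightarrow> P n \<Longrightarrow> \<exists>k. \<not> P k \<and> P (Suc k)"
  by (induct n) auto

context group begin

lemma derived_pow_normal: "V \<lhd> G \<Longrightarrow> (derived G ^^ k) V \<lhd> G"
  by (induct k) (auto intro: derived_is_normal)

lemma derived_pow_sub: "subgroup V G \<Longrightarrow> (derived G ^^ k) V \<subseteq> V"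
proof (induct k)
  case 0 then show ?case by simp
next
  case (Suc k)
  have "subgroup ((derived G ^^ k) V) G" using exp_of_derived_is_subgroup[OF Suc.prems] .
  then have "derived G ((derived G ^^ k) V) \<subseteq> (derived G ^^ k) V" by (rule derived_incl[OF subset_refl])
  then show ?case using Suc by simp
qed

lemma chain_contra:
  assumes pr: "Factorial_Ring.prime (p::nat)" and sol: "solvable G"
  and Anorm: "\<forall>g\<in>carrier G. \<forall>x\<in>A. g \<otimes> x \<otimes> inv g \<in> A" and AC: "A \<subseteq> carrier G"
  and Ap: "\<forall>x\<in>A. \<forall>y\<in>A. \<exists>k. (x \<otimes> y) [^] (p^k) = \<one>"
  and ac: "a \<in> carrier G" "c \<in> carrier G" "a \<otimes> c = c \<otimes> a"
  and ap: "a [^] p = \<one>" and cp: "c [^] p = \<one>"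
  and aA: "\<And>m::nat. a \<otimes> c [^] m \<in> A"
  and Vn: "V \<lhd> G" and Vp: "\<not> p dvd card V" and nc: "\<exists>v\<in>V. v \<otimes> c \<noteq> c \<otimes> v"
  shows False
proof -
  have Vs: "subgroup V G" using Vn by (rule normal.axioms(1))
  define P where "P k = (\<forall>u \<in> (derived G ^^ k) V. u \<otimes> c = c \<otimes> u)" for k
  have P0: "\<not> P 0" unfolding P_def using nc by auto
  obtain n where n: "(derived G ^^ n) (carrier G) = {\<one>}" using sol solvable_iff_trivial_derived_seq by blast
  have "(derived G ^^ n) V \<subseteq> {\<one>}" using mono_exp_of_derived[OF subgroup.subset[OF Vs], of n] n by simp
  then have Pn: "P n" unfolding P_def using ac by auto
  obtain k where k: "\<not> P k" "P (Suc k)" using step_exists[of P n] P0 Pn by blast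
  define U where "U = (derived G ^^ k) V"
  define W where "W = derived G U"
  have Un: "U \<lhd> G" unfolding U_def using derived_pow_normal[OF Vn] .
  have Us: "subgroup U G" using Un by (rule normal.axioms(1))
  have Wn: "W \<lhd> G" unfolding W_def using derived_is_normal[OF Un] .
  have Ws: "subgroup W G" using Wn by (rule normal.axioms(1))
  have WU: "W \<subseteq> U" unfolding W_def by (rule derived_incl[OF subset_refl Us])
  have UV: "U \<subseteq> V" unfolding U_def using derived_pow_sub[OF Vs] .
  have Wc: "\<forall>w\<in>W. w \<otimes> c = c \<otimes> w" using k(2) unfolding P_def W_def U_def by simp
  have comm: "\<forall>u\<in>U. \<forall>v\<in>U. u \<otimes> v \<otimes> inv u \<otimes> inv v \<in> W"
  proof (intro ballI)
    fix u v assume "u \<in> U" "v \<in> U"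
    then have "u \<otimes> v \<otimes> inv u \<otimes> inv v \<in> derived_set G U" by blast
    then show "u \<otimes> v \<otimes> inv u \<otimes> inv v \<in> W" unfolding W_def derived_def by (rule generate.incl)
  qed
  have Uc: "\<forall>u\<in>U. coprime (ord u) p" using coprime_of_sub[OF Vs _ Vp pr] UV by blast
  have step: "\<forall>u\<in>U. (u \<otimes> c) \<otimes> inv (c \<otimes> u) \<in> W"
    using quotient_step[OF pr Anorm AC Ap Wn Un comm Uc ac ap cp aA] by blast
  have "\<forall>u\<in>U. u \<otimes> c = c \<otimes> u"
    using stab[OF pr Ws Us WU Uc ac(2) cp Wc step] by blast
  then show False using k(1) unfolding P_def U_def by simp
qed

end

lemma ppow_of_factors:
  assumes n: "(n::nat) > 0" and pr: "Factorial_Ring.prime p"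
  and f: "\<And>q. Factorial_Ring.prime q \<Longrightarrow> q dvd n \<Longrightarrow> q = p"
  shows "\<exists>k. n = p ^ k"
proof -
  have nu: "\<not> is_unit p" using prime_gt_1_nat[OF pr] by simp
  obtain y where y: "n = p ^ multiplicity p n * y" "\<not> p dvd y"
    using multiplicity_decompose'[of n p] n nu by auto
  show ?thesis
  proof (cases "y = 1")
    case True then show ?thesis using y by auto
  next
    case False
    then obtain q where q: "Factorial_Ring.prime q" "q dvd y" using prime_factor_nat by blast
    have "q dvd p ^ multiplicity p n * y" using q(2) by (rule dvd_mult)
    then have "q dvd n" using y(1) by simp
    then have "q = p" using f q by blast
    then show ?thesis using q y by simp
  qed
qed

context group begin

lemma cauchy_sub:
  assumes fin: "finite (carrier G)" and S: "subgroup S G" and pr: "Factorial_Ring.prime (q::nat)" and d: "q dvd card S"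
  shows "\<exists>x\<in>S. ord x = q"
proof -
  have grp: "group (G\<lparr>carrier := S\<rparr>)" using subgroup.subgroup_is_group[OF S is_group] .
  have finS: "finite S" using fin subgroup.subset[OF S] finite_subset by blast
  have ord: "order (G\<lparr>carrier := S\<rparr>) = q ^ 1 * (card S div q)" using d unfolding order_def by simp
  obtain K where K: "subgroup K (G\<lparr>carrier := S\<rparr>)" "card K = q ^ 1"
    using sylow_thm[OF pr grp ord] finS by auto
  have KG: "subgroup K G" using incl_subgroup[OF S K(1)] .
  have "K \<noteq> {\<one>}"
  proof
    assume "K = {\<one>}"
    then have "card K = 1" by simp
    with K(2) prime_gt_1_nat[OF pr] show False by simp
  qed
  moreover have "\<one> \<in> K" using subgroup.one_closed[OF KG] .
  ultimately obtain x where x: "x \<in> K" "x \<noteq> \<one>" by blast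
  have xc: "x \<in> carrier G" using subgroup.mem_carrier[OF KG x(1)] .
  have "ord x dvd q" using ord_dvd_card_sub[OF KG x(1)] K(2) by simp
  moreover have "ord x \<noteq> 1" using ord_eq_1[OF xc] x(2) by simp
  ultimately have "ord x = q" using pr prime_nat_iff by blast
  moreover have "x \<in> S" using x(1) subgroup.subset[OF K(1)] by auto
  ultimately show ?thesis by blast
qed

lemma pgroup_card:
  assumes fin: "finite (carrier G)" and P: "subgroup P G" and pr: "Factorial_Ring.prime (p::nat)"
  and pe: "\<forall>s\<in>P. \<exists>e. s [^] (p ^ e) = \<one>"
  shows "\<exists>k. card P = p ^ k"
proof (rule ppow_of_factors[OF _ pr])
  have finP: "finite P" using fin subgroup.subset[OF P] finite_subset by blast
  have "\<one> \<in> P" using subgroup.one_closed[OF P] .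
  then show "card P > 0" using finP card_gt_0_iff by blast
next
  fix q :: nat assume q: "Factorial_Ring.prime q" "q dvd card P"
  obtain s where s: "s \<in> P" "ord s = q" using cauchy_sub[OF fin P q] by blast
  have sc: "s \<in> carrier G" using subgroup.mem_carrier[OF P s(1)] .
  obtain e where "s [^] (p ^ e) = \<one>" using pe s by blast
  then have "q dvd p ^ e" using pow_eq_id[OF sc] s(2) by simp
  then have "q dvd p" using prime_dvd_power q(1) by blast
  then show "q = p" using primes_dvd_imp_eq q(1) pr by blast
qed

lemma conj_pow: "l \<in> carrier G \<Longrightarrow> s \<in> carrier G \<Longrightarrow> (inv l \<otimes> s \<otimes> l) [^] (n::nat) = inv l \<otimes> s [^] n \<otimes> l"
proof (induct n)
  case 0 then show ?case by simp
next
  case (Suc n)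
  then have "(inv l \<otimes> s \<otimes> l) [^] Suc n = (inv l \<otimes> s [^] n \<otimes> l) \<otimes> (inv l \<otimes> s \<otimes> l)" by simp
  also have "\<dots> = inv l \<otimes> s [^] Suc n \<otimes> l" using Suc.prems by (simp add: m_assoc)
  finally show ?case .
qed

lemma ord_p:
  assumes pr: "Factorial_Ring.prime (p::nat)" and c: "c \<in> carrier G" and cp: "c [^] p = \<one>" and c1: "c \<noteq> \<one>"
  shows "ord c = p"
proof -
  have "ord c dvd p" using pow_eq_id[OF c] cp by simp
  moreover have "ord c \<noteq> 1" using ord_eq_1[OF c] c1 by simp
  ultimately show ?thesis using pr prime_nat_iff by blast
qed

end

context group begin

lemma sub_pow_closed: "subgroup H G \<Longrightarrow> x \<in> H \<Longrightarrow> x [^] (n::nat) \<in> H"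
proof (induct n)
  case 0 then show ?case using subgroup.one_closed by simp
next
  case (Suc n)
  have "x [^] Suc n = x [^] n \<otimes> x" by simp
  then show ?case using Suc subgroup.m_closed by metis
qed

lemma exists_noncentral:
  assumes fin: "finite (carrier G)" and sol: "solvable G" and pr: "Factorial_Ring.prime (p::nat)"
  and Op: "Op_trivial p G"
  and c: "c \<in> carrier G" and cp: "c [^] p = \<one>" and c1: "c \<noteq> \<one>"
  shows "\<exists>V. V \<lhd> G \<and> \<not> p dvd card V \<and> (\<exists>v\<in>V. v \<otimes> c \<noteq> c \<otimes> v)"
proof (rule ccontr)
  assume H: "\<not> ?thesis"
  have H': "v \<otimes> c = c \<otimes> v" if "V \<lhd> G" "\<not> p dvd card V" "v \<in> V" for V v
    using H that by blast
  have p1: "p > 1" using prime_gt_1_nat[OF pr] .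
  define S where "S = {Q. Q \<lhd> G \<and> \<not> p dvd card Q}"
  have oneS: "{\<one>} \<in> S" unfolding S_def using one_is_normal p1 by simp
  have bound: "\<forall>Q. Q \<in> S \<longrightarrow> card Q < Suc (card (carrier G))"
  proof (intro allI impI)
    fix Q assume "Q \<in> S"
    then have "Q \<subseteq> carrier G" unfolding S_def using normal.axioms(1) subgroup.subset by blast
    then have "card Q \<le> card (carrier G)" using card_mono fin by blast
    then show "card Q < Suc (card (carrier G))" by simp
  qed
  obtain Q where Q: "Q \<in> S" "\<forall>Q'. Q' \<in> S \<longrightarrow> card Q' \<le> card Q"
    using Lattices_Big.ex_has_greatest_nat[of "\<lambda>Q. Q \<in> S" "{\<one>}" card, OF oneS bound] by blast
  have Qn: "Q \<lhd> G" and Qp: "\<not> p dvd card Q" using Q(1) unfolding S_def by auto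
  have Qs: "subgroup Q G" using Qn by (rule normal.axioms(1))
  have Qcar: "q \<in> Q \<Longrightarrow> q \<in> carrier G" for q using subgroup.mem_carrier[OF Qs] .
  have Qc: "\<forall>q\<in>Q. coprime (ord q) p" using coprime_of_sub[OF Qs _ Qp pr] by blast
  define C where "C = {g \<in> carrier G. \<forall>q\<in>Q. g \<otimes> q = q \<otimes> g}"
  have Ccar: "g \<in> C \<Longrightarrow> g \<in> carrier G" for g unfolding C_def by simp
  have Cs: "subgroup C G"
  proof (rule subgroupI)
    show "C \<subseteq> carrier G" unfolding C_def by auto
    show "C \<noteq> {}" unfolding C_def using Qcar by auto
  next
    fix g assume g: "g \<in> C"
    have gc: "g \<in> carrier G" using Ccar g .
    show "inv g \<in> C" unfolding C_def
    proof (simp add: gc, intro ballI)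
      fix q assume q: "q \<in> Q"
      have "q \<otimes> g = g \<otimes> q" using g q unfolding C_def by simp
      then have "q \<otimes> inv g = inv g \<otimes> q" using comm_inv[OF Qcar[OF q] gc] by blast
      then show "inv g \<otimes> q = q \<otimes> inv g" by simp
    qed
  next
    fix g h assume g: "g \<in> C" and h: "h \<in> C"
    have gc: "g \<in> carrier G" and hc: "h \<in> carrier G" using Ccar g h by auto
    show "g \<otimes> h \<in> C" unfolding C_def
    proof (simp add: gc hc, intro ballI)
      fix q assume q: "q \<in> Q"
      have "q \<otimes> g = g \<otimes> q" "q \<otimes> h = h \<otimes> q" using g h q unfolding C_def by auto
      then have "q \<otimes> (g \<otimes> h) = (g \<otimes> h) \<otimes> q" using comm_mult[OF Qcar[OF q] gc hc] by blast
      then show "g \<otimes> h \<otimes> q = q \<otimes> (g \<otimes> h)" by simp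
    qed
  qed
  have Cn: "C \<lhd> G"
  proof (rule normal_invI[OF Cs])
    fix x h assume x: "x \<in> carrier G" and h: "h \<in> C"
    have hc: "h \<in> carrier G" using Ccar h .
    show "x \<otimes> h \<otimes> inv x \<in> C" unfolding C_def
    proof (simp add: x hc, intro ballI)
      fix q assume q: "q \<in> Q"
      define q' where "q' = inv x \<otimes> q \<otimes> x"
      have q'Q: "q' \<in> Q" unfolding q'_def using normal.inv_op_closed1[OF Qn x q] .
      have q'c: "q' \<in> carrier G" using Qcar q'Q .
      have hq: "h \<otimes> q' = q' \<otimes> h" using h q'Q unfolding C_def by auto
      have qe: "q = x \<otimes> q' \<otimes> inv x" unfolding q'_def using x Qcar[OF q] by (simp add: m_assoc)
      have "x \<otimes> h \<otimes> inv x \<otimes> (x \<otimes> q' \<otimes> inv x) = x \<otimes> (h \<otimes> q') \<otimes> inv x"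
        using x hc q'c by (simp add: m_assoc)
      also have "\<dots> = x \<otimes> (q' \<otimes> h) \<otimes> inv x" using hq by simp
      also have "\<dots> = (x \<otimes> q' \<otimes> inv x) \<otimes> (x \<otimes> h \<otimes> inv x)"
        using x hc q'c by (simp add: m_assoc)
      finally show "x \<otimes> h \<otimes> inv x \<otimes> q = q \<otimes> (x \<otimes> h \<otimes> inv x)" using qe by simp
    qed
  qed
  have cC: "c \<in> C" unfolding C_def using c H'[OF Qn Qp] by auto
  have cQ: "c \<notin> Q"
  proof
    assume "c \<in> Q"
    then have "ord c dvd card Q" by (rule ord_dvd_card_sub[OF Qs])
    then show False using ord_p[OF pr c cp c1] Qp by simp
  qed
  define P where "P k = ((derived G ^^ k) C \<subseteq> Q)" for k
  have P0: "\<not> P 0" unfolding P_def using cC cQ by auto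
  obtain n where n: "(derived G ^^ n) (carrier G) = {\<one>}" using sol solvable_iff_trivial_derived_seq by blast
  have "(derived G ^^ n) C \<subseteq> {\<one>}" using mono_exp_of_derived[OF subgroup.subset[OF Cs], of n] n by simp
  then have Pn: "P n" unfolding P_def using subgroup.one_closed[OF Qs] by auto
  obtain k where k: "\<not> P k" "P (Suc k)" using step_exists[of P n] P0 Pn by blast
  define L where "L = (derived G ^^ k) C"
  have Ln: "L \<lhd> G" unfolding L_def using derived_pow_normal[OF Cn] .
  have Ls: "subgroup L G" using Ln by (rule normal.axioms(1))
  have Lcar: "l \<in> L \<Longrightarrow> l \<in> carrier G" for l using subgroup.mem_carrier[OF Ls] .
  have LC: "L \<subseteq> C" unfolding L_def using derived_pow_sub[OF Cs] .
  have LnQ: "\<not> L \<subseteq> Q" using k(1) unfolding P_def L_def .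
  have dLQ: "derived G L \<subseteq> Q" using k(2) unfolding P_def L_def by simp
  have comm: "x \<otimes> y \<otimes> inv x \<otimes> inv y \<in> Q" if "x \<in> L" "y \<in> L" for x y
  proof -
    have "x \<otimes> y \<otimes> inv x \<otimes> inv y \<in> derived_set G L" using that by blast
    then have "x \<otimes> y \<otimes> inv x \<otimes> inv y \<in> derived G L" unfolding derived_def by (rule generate.incl)
    then show ?thesis using dLQ by blast
  qed
  have LQcomm: "l \<otimes> q = q \<otimes> l" if "l \<in> L" "q \<in> Q" for l q
    using that LC unfolding C_def by blast
  have claim1: "l \<otimes> s = s \<otimes> l" if s: "s \<in> L" and se: "s [^] (p ^ e) = \<one>" and l: "l \<in> L" for s l e
  proof -
    have sc: "s \<in> carrier G" and lc: "l \<in> carrier G" using Lcar s l by auto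
    define z where "z = inv s \<otimes> inv l \<otimes> s \<otimes> l"
    have "inv s \<otimes> inv l \<otimes> inv (inv s) \<otimes> inv (inv l) \<in> Q"
      using comm[OF subgroup.m_inv_closed[OF Ls s] subgroup.m_inv_closed[OF Ls l]] .
    then have zQ: "z \<in> Q" unfolding z_def using sc lc by simp
    have zc: "z \<in> carrier G" using Qcar zQ .
    have szc: "s \<otimes> z = z \<otimes> s" using LQcomm[OF s zQ] .
    have e1: "inv l \<otimes> s \<otimes> l = s \<otimes> z" unfolding z_def using sc lc by (simp add: m_assoc)
    have "(s \<otimes> z) [^] (p ^ e) = s [^] (p ^ e) \<otimes> z [^] (p ^ e)" using pow_mult_distrib[OF szc sc zc] .
    also have "(s \<otimes> z) [^] (p ^ e) = inv l \<otimes> s [^] (p ^ e) \<otimes> l" using conj_pow[OF lc sc] e1 by simp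
    finally have "inv l \<otimes> s [^] (p ^ e) \<otimes> l = s [^] (p ^ e) \<otimes> z [^] (p ^ e)" .
    then have "z [^] (p ^ e) = \<one>" using se lc zc by simp
    then have "z = \<one>" using coprime_pow_one[OF zc] Qc zQ by blast
    then have "inv s \<otimes> inv l \<otimes> s \<otimes> l = \<one>" unfolding z_def .
    then show ?thesis by (rule comm_from_comm[OF sc lc])
  qed
  define PP where "PP = {s \<in> L. \<exists>e. s [^] (p ^ e) = \<one>}"
  have PPs: "subgroup PP G"
  proof (rule subgroupI)
    show "PP \<subseteq> carrier G" unfolding PP_def using Lcar by auto
    have "\<one> \<in> PP" unfolding PP_def using subgroup.one_closed[OF Ls] by auto
    then show "PP \<noteq> {}" by blast
  next
    fix s assume s: "s \<in> PP"
    then obtain e where e: "s [^] (p ^ e) = \<one>" "s \<in> L" unfolding PP_def by blast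
    have sc: "s \<in> carrier G" using Lcar e(2) .
    have "inv s [^] (p ^ e) = \<one>" using nat_pow_inv[OF sc] e by simp
    then show "inv s \<in> PP" unfolding PP_def using subgroup.m_inv_closed[OF Ls e(2)] by blast
  next
    fix s t assume s: "s \<in> PP" and t: "t \<in> PP"
    obtain e1 where e1: "s [^] (p ^ e1) = \<one>" "s \<in> L" using s unfolding PP_def by blast
    obtain e2 where e2: "t [^] (p ^ e2) = \<one>" "t \<in> L" using t unfolding PP_def by blast
    have sc: "s \<in> carrier G" and tc: "t \<in> carrier G" using Lcar e1(2) e2(2) by auto
    have st: "s \<otimes> t = t \<otimes> s" using claim1[OF e2(2) e2(1) e1(2)] by simp
    have "(s \<otimes> t) [^] (p ^ (e1 + e2)) = s [^] (p ^ (e1 + e2)) \<otimes> t [^] (p ^ (e1 + e2))"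
      using pow_mult_distrib[OF st sc tc] .
    also have "\<dots> = \<one>" using pe_pow[OF sc e1(1)] pe_pow[OF tc e2(1)] by simp
    finally show "s \<otimes> t \<in> PP" unfolding PP_def using subgroup.m_closed[OF Ls e1(2) e2(2)] by blast
  qed
  have PPn: "PP \<lhd> G"
  proof (rule normal_invI[OF PPs])
    fix x s assume x: "x \<in> carrier G" and s: "s \<in> PP"
    obtain e where e: "s [^] (p ^ e) = \<one>" "s \<in> L" using s unfolding PP_def by blast
    have sc: "s \<in> carrier G" using Lcar e(2) .
    have xL: "x \<otimes> s \<otimes> inv x \<in> L" using normal.inv_op_closed2[OF Ln x e(2)] .
    have "(inv (inv x) \<otimes> s \<otimes> inv x) [^] (p ^ e) = inv (inv x) \<otimes> s [^] (p ^ e) \<otimes> inv x"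
      using conj_pow[OF inv_closed[OF x] sc] .
    then have "(x \<otimes> s \<otimes> inv x) [^] (p ^ e) = \<one>" using x e(1) by simp
    then show "x \<otimes> s \<otimes> inv x \<in> PP" unfolding PP_def using xL by blast
  qed
  have "\<exists>k. card PP = p ^ k" using pgroup_card[OF fin PPs pr] unfolding PP_def by blast
  then have "p_subgroup p PP G" unfolding p_subgroup_def using PPs by blast
  then have PP1: "PP = {\<one>}" using Op PPn unfolding Op_trivial_def by blast
  have claim3: "coprime (ord x) p" if x: "x \<in> L" for x
  proof (rule ccontr)
    assume nc: "\<not> coprime (ord x) p"
    have xc: "x \<in> carrier G" using Lcar x .
    have "p dvd ord x"
    proof (rule ccontr)
      assume "\<not> p dvd ord x"
      then have "coprime p (ord x)" by (rule prime_imp_coprime[OF pr])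
      then show False using nc by (simp add: coprime_commute)
    qed
    then obtain m where m: "ord x = p * m" by blast
    have o1: "ord x \<ge> 1" using ord_ge_1[OF fin xc] .
    have m0: "m \<noteq> 0" using m o1 by auto
    have mdvd: "m dvd ord x" using m by simp
    define y where "y = x [^] m"
    have oy: "ord y = p" unfolding y_def using ord_pow[OF xc mdvd m0] m m0 by simp
    have yc: "y \<in> carrier G" unfolding y_def using xc by simp
    have yL: "y \<in> L" unfolding y_def using sub_pow_closed[OF Ls x] .
    have "y [^] (p ^ 1) = \<one>" using pow_ord_eq_1[OF yc] oy by simp
    then have "y \<in> PP" unfolding PP_def using yL by blast
    then have "y = \<one>" using PP1 by blast
    then show False using oy p1 by simp
  qed
  define LQ where "LQ = {l \<otimes> q | l q. l \<in> L \<and> q \<in> Q}"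
  have LQs: "subgroup LQ G"
  proof (rule subgroupI)
    show "LQ \<subseteq> carrier G" unfolding LQ_def using Lcar Qcar by auto
    have "\<one> \<otimes> \<one> \<in> LQ" unfolding LQ_def using subgroup.one_closed[OF Ls] subgroup.one_closed[OF Qs] by blast
    then show "LQ \<noteq> {}" by blast
  next
    fix y assume "y \<in> LQ"
    then obtain l q where lq: "y = l \<otimes> q" "l \<in> L" "q \<in> Q" unfolding LQ_def by blast
    have lc: "l \<in> carrier G" and qc: "q \<in> carrier G" using Lcar Qcar lq by auto
    have il: "inv l \<in> L" using subgroup.m_inv_closed[OF Ls lq(2)] .
    have iq: "inv q \<in> Q" using subgroup.m_inv_closed[OF Qs lq(3)] .
    have "inv y = inv q \<otimes> inv l" using lq lc qc by (simp add: inv_mult_group)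
    also have "\<dots> = inv l \<otimes> inv q" using LQcomm[OF il iq] by simp
    finally show "inv y \<in> LQ" unfolding LQ_def using il iq by blast
  next
    fix y1 y2 assume "y1 \<in> LQ" "y2 \<in> LQ"
    then obtain l1 q1 l2 q2 where lq: "y1 = l1 \<otimes> q1" "l1 \<in> L" "q1 \<in> Q" "y2 = l2 \<otimes> q2" "l2 \<in> L" "q2 \<in> Q"
      unfolding LQ_def by blast
    have c1: "l1 \<in> carrier G" "q1 \<in> carrier G" "l2 \<in> carrier G" "q2 \<in> carrier G" using Lcar Qcar lq by auto
    have "y1 \<otimes> y2 = l1 \<otimes> (q1 \<otimes> l2) \<otimes> q2" using lq c1 by (simp add: m_assoc)
    also have "q1 \<otimes> l2 = l2 \<otimes> q1" using LQcomm[OF lq(5) lq(3)] by simp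
    also have "l1 \<otimes> (l2 \<otimes> q1) \<otimes> q2 = (l1 \<otimes> l2) \<otimes> (q1 \<otimes> q2)" using c1 by (simp add: m_assoc)
    finally show "y1 \<otimes> y2 \<in> LQ" unfolding LQ_def
      using subgroup.m_closed[OF Ls lq(2) lq(5)] subgroup.m_closed[OF Qs lq(3) lq(6)] by blast
  qed
  have LQn: "LQ \<lhd> G"
  proof (rule normal_invI[OF LQs])
    fix x y assume x: "x \<in> carrier G" and "y \<in> LQ"
    then obtain l q where lq: "y = l \<otimes> q" "l \<in> L" "q \<in> Q" unfolding LQ_def by blast
    have lc: "l \<in> carrier G" and qc: "q \<in> carrier G" using Lcar Qcar lq by auto
    have "x \<otimes> y \<otimes> inv x = (x \<otimes> l \<otimes> inv x) \<otimes> (x \<otimes> q \<otimes> inv x)" using lq x lc qc by (simp add: m_assoc)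
    then show "x \<otimes> y \<otimes> inv x \<in> LQ" unfolding LQ_def
      using normal.inv_op_closed2[OF Ln x lq(2)] normal.inv_op_closed2[OF Qn x lq(3)] by blast
  qed
  have LQc: "coprime (ord y) p" if "y \<in> LQ" for y
  proof -
    obtain l q where lq: "y = l \<otimes> q" "l \<in> L" "q \<in> Q" using \<open>y \<in> LQ\<close> unfolding LQ_def by blast
    have lc: "l \<in> carrier G" and qc: "q \<in> carrier G" using Lcar Qcar lq by auto
    have "ord (l \<otimes> q) dvd ord l * ord q" using ord_mul_divides[OF LQcomm[OF lq(2) lq(3)] lc qc] .
    moreover have "coprime (ord l * ord q) p" using claim3[OF lq(2)] Qc lq(3) by simp
    ultimately show ?thesis using lq(1) coprime_imp_coprime dvd_trans by blast
  qed
  have LQp: "\<not> p dvd card LQ"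
  proof
    assume "p dvd card LQ"
    then obtain y where y: "y \<in> LQ" "ord y = p" using cauchy_sub[OF fin LQs pr] by blast
    then have "coprime p p" using LQc by fastforce
    then show False using p1 by simp
  qed
  have "LQ \<in> S" unfolding S_def using LQn LQp by blast
  then have cle: "card LQ \<le> card Q" using Q(2) by blast
  have QLQ: "Q \<subseteq> LQ"
  proof
    fix q assume q: "q \<in> Q"
    have "q = \<one> \<otimes> q" using Qcar q by simp
    then show "q \<in> LQ" unfolding LQ_def using subgroup.one_closed[OF Ls] q by blast
  qed
  have finLQ: "finite LQ" using fin subgroup.subset[OF LQs] finite_subset by blast
  have "Q = LQ" using card_seteq[OF finLQ QLQ cle] .
  moreover have "L \<subseteq> LQ"
  proof
    fix l assume l: "l \<in> L"
    have "l = l \<otimes> \<one>" using Lcar l by simp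
    then show "l \<in> LQ" unfolding LQ_def using subgroup.one_closed[OF Qs] l by blast
  qed
  ultimately show False using LnQ by blast
qed

end

context group begin

lemma g_comm_pow:
  assumes x: "x \<in> carrier G" and y: "y \<in> carrier G" and xy: "x \<otimes> y = y \<otimes> x"
  shows "x \<otimes> y [^] (n::nat) = y [^] n \<otimes> x"
proof (induct n)
  case 0 then show ?case using x by simp
next
  case (Suc n)
  have "x \<otimes> y [^] Suc n = (x \<otimes> y [^] n) \<otimes> y" using x y by (simp add: m_assoc)
  also have "\<dots> = (y [^] n \<otimes> x) \<otimes> y" by (simp only: Suc)
  also have "\<dots> = y [^] n \<otimes> (x \<otimes> y)" using x y by (simp add: m_assoc)
  also have "\<dots> = y [^] n \<otimes> (y \<otimes> x)" by (simp only: xy)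
  also have "\<dots> = y [^] Suc n \<otimes> x" using x y by (simp add: m_assoc)
  finally show ?case .
qed

lemma g_pow_comm2:
  assumes x: "x \<in> carrier G" and y: "y \<in> carrier G" and xy: "x \<otimes> y = y \<otimes> x"
  shows "x [^] (m::nat) \<otimes> y [^] (n::nat) = y [^] n \<otimes> x [^] m"
proof -
  have 1: "x \<otimes> y [^] n = y [^] n \<otimes> x" by (rule g_comm_pow[OF x y xy])
  have 2: "y [^] n \<otimes> x [^] m = x [^] m \<otimes> y [^] n"
    by (rule g_comm_pow) (use x y 1 in auto)
  show ?thesis by (rule sym[OF 2])
qed

lemma g_pow_mod: "y \<in> carrier G \<Longrightarrow> y [^] (p::nat) = \<one> \<Longrightarrow> y [^] (n::nat) = y [^] (n mod p)"
proof -
  assume y: "y \<in> carrier G" and yp: "y [^] p = \<one>"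
  have "y [^] n = y [^] (p * (n div p) + n mod p)" by simp
  also have "\<dots> = (y [^] p) [^] (n div p) \<otimes> y [^] (n mod p)" using y by (simp add: nat_pow_mult nat_pow_pow)
  finally show ?thesis using yp y by simp
qed

lemma gen_two:
  assumes a: "a \<in> carrier G" and c: "c \<in> carrier G" and ac: "a \<otimes> c = c \<otimes> a"
  and ap: "a [^] (p::nat) = \<one>" and cp: "c [^] p = \<one>" and pp: "p > 0"
  shows "generate G {c, a} \<subseteq> (\<lambda>(i, j). a [^] i \<otimes> c [^] j) ` ({..<p} \<times> {..<p})"
proof -
  define T where "T = {a [^] (i::nat) \<otimes> c [^] (j::nat) | i j. True}"
  have Tc: "T \<subseteq> carrier G" unfolding T_def using a c by auto
  have Ts: "subgroup T G"
  proof (rule subgroupI[OF Tc])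
    have "a [^] (0::nat) \<otimes> c [^] (0::nat) \<in> T" unfolding T_def by blast
    then show "T \<noteq> {}" by blast
  next
    fix x assume "x \<in> T"
    then obtain i j where x: "x = a [^] (i::nat) \<otimes> c [^] (j::nat)" unfolding T_def by blast
    have ia: "inv (a [^] i) = a [^] ((p - 1) * i)"
    proof -
      have "a [^] ((p - 1) * i) \<otimes> a [^] i = a [^] ((p - 1) * i + i)" using a by (simp add: nat_pow_mult)
      also have "(p - 1) * i + i = p * i"
      proof -
        obtain q where "p = Suc q" using pp by (cases p) auto
        then show ?thesis by simp
      qed
      also have "a [^] (p * i) = \<one>" using ap a by (simp add: nat_pow_pow[symmetric])
      finally show ?thesis using a inv_equality by simp
    qed
    have ic: "inv (c [^] j) = c [^] ((p - 1) * j)"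
    proof -
      have "c [^] ((p - 1) * j) \<otimes> c [^] j = c [^] ((p - 1) * j + j)" using c by (simp add: nat_pow_mult)
      also have "(p - 1) * j + j = p * j"
      proof -
        obtain q where "p = Suc q" using pp by (cases p) auto
        then show ?thesis by simp
      qed
      also have "c [^] (p * j) = \<one>" using cp c by (simp add: nat_pow_pow[symmetric])
      finally show ?thesis using c inv_equality by simp
    qed
    have "inv x = inv (c [^] j) \<otimes> inv (a [^] i)" using x a c by (simp add: inv_mult_group)
    also have "\<dots> = c [^] ((p - 1) * j) \<otimes> a [^] ((p - 1) * i)" using ia ic by simp
    also have "\<dots> = a [^] ((p - 1) * i) \<otimes> c [^] ((p - 1) * j)" using g_pow_comm2[OF a c ac] by simp
    finally show "inv x \<in> T" unfolding T_def by blast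
  next
    fix x y assume "x \<in> T" "y \<in> T"
    then obtain i j k l where x: "x = a [^] (i::nat) \<otimes> c [^] (j::nat)" and y: "y = a [^] (k::nat) \<otimes> c [^] (l::nat)"
      unfolding T_def by blast
    have "x \<otimes> y = a [^] i \<otimes> (c [^] j \<otimes> a [^] k) \<otimes> c [^] l" using x y a c by (simp add: m_assoc)
    also have "c [^] j \<otimes> a [^] k = a [^] k \<otimes> c [^] j" using g_pow_comm2[OF a c ac] by simp
    also have "a [^] i \<otimes> (a [^] k \<otimes> c [^] j) \<otimes> c [^] l = (a [^] i \<otimes> a [^] k) \<otimes> (c [^] j \<otimes> c [^] l)"
      using a c by (simp add: m_assoc)
    also have "\<dots> = a [^] (i + k) \<otimes> c [^] (j + l)" using a c by (simp add: nat_pow_mult)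
    finally show "x \<otimes> y \<in> T" unfolding T_def by blast
  qed
  have "{c, a} \<subseteq> T"
  proof -
    have "c = a [^] (0::nat) \<otimes> c [^] (1::nat)" using c by simp
    moreover have "a = a [^] (1::nat) \<otimes> c [^] (0::nat)" using a by simp
    ultimately show ?thesis unfolding T_def by blast
  qed
  then have "generate G {c, a} \<subseteq> T" by (rule generate_subgroup_incl[OF _ Ts])
  moreover have "T \<subseteq> (\<lambda>(i, j). a [^] i \<otimes> c [^] j) ` ({..<p} \<times> {..<p})"
  proof
    fix x assume "x \<in> T"
    then obtain i j where x: "x = a [^] (i::nat) \<otimes> c [^] (j::nat)" unfolding T_def by blast
    have "x = a [^] (i mod p) \<otimes> c [^] (j mod p)" using x g_pow_mod[OF a ap, of i] g_pow_mod[OF c cp, of j] by simp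
    moreover have "(i mod p, j mod p) \<in> {..<p} \<times> {..<p}" using pp by simp
    ultimately show "x \<in> (\<lambda>(i, j). a [^] i \<otimes> c [^] j) ` ({..<p} \<times> {..<p})" by force
  qed
  ultimately show ?thesis by blast
qed

lemma pow_in_sub_imp:
  assumes H: "subgroup H G" and a: "a \<in> carrier G" and ap: "ord a = (p::nat)" and pr: "Factorial_Ring.prime p"
  and r: "0 < r" "r < p" and ar: "a [^] r \<in> H"
  shows "a \<in> H"
proof -
  have "r \<noteq> 0" using r by simp
  then obtain s t where st: "r * s = p * t + gcd r p" using bezout_nat by blast
  have "\<not> p dvd r" using r nat_dvd_not_less by blast
  then have "coprime p r" by (rule prime_imp_coprime[OF pr])
  then have "gcd r p = 1" by (simp add: coprime_iff_gcd_eq_1 gcd.commute)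
  then have st1: "r * s = p * t + 1" using st by simp
  have "(a [^] r) [^] s = a [^] (p * t + 1)" using a st1 by (simp add: nat_pow_pow)
  also have "\<dots> = (a [^] p) [^] t \<otimes> a" using a by (simp add: nat_pow_mult[symmetric] nat_pow_pow)
  also have "a [^] p = \<one>" using ap pow_ord_eq_1[OF a] by simp
  finally have "(a [^] r) [^] s = a" using a by simp
  then show ?thesis using sub_pow_closed[OF H ar, of s] by simp
qed

end

theorem lemma3p1:
  fixes G (structure) and p :: nat and A :: "'a set" and a c :: 'a
  assumes "Factorial_Ring.prime p"
    and "group G" and "finite (carrier G)" and "solvable G"
    and "Op_trivial p G"
    and "A \<noteq> {}" and "normal_subset A G"
    and "\<forall>x\<in>A. group.ord G x = p"
    and "\<forall>x\<in>A. \<forall>y\<in>A. p_element p G (x \<otimes> y)"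
    and "a \<in> A" and "a \<notin> derived G (carrier G)"
    and "c \<in> derived G (carrier G)"
    and "elem_abelian_of_order p 2 (generate G {c, a}) G"
  shows "card (conj_class G a \<inter> generate G {c, a}) < p"
proof -
  note pr = assms(1)
  interpret group G by (rule assms(2))
  note fin = assms(3) and sol = assms(4) and Op = assms(5)
  define XX where "XX = generate G {c, a}"
  have Xs: "subgroup XX G" and Xcard: "card XX = p ^ 2"
    and Xab: "\<forall>x\<in>XX. \<forall>y\<in>XX. x \<otimes> y = y \<otimes> x" and Xexp: "\<forall>x\<in>XX. x [^] p = \<one>"
    using assms(13) unfolding elem_abelian_of_order_def XX_def by auto
  have AC: "A \<subseteq> carrier G" and Anorm: "\<forall>g\<in>carrier G. \<forall>x\<in>A. g \<otimes> x \<otimes> inv g \<in> A"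
    using assms(7) unfolding normal_subset_def by auto
  have aC: "a \<in> carrier G" using AC assms(10) by auto
  have Gd: "subgroup (derived G (carrier G)) G" by (rule derived_is_subgroup) simp
  have cC: "c \<in> carrier G" using subgroup.mem_carrier[OF Gd assms(12)] .
  have aX: "a \<in> XX" and cX: "c \<in> XX" unfolding XX_def by (auto intro: generate.incl)
  have ac: "a \<otimes> c = c \<otimes> a" using Xab aX cX by blast
  have ap: "a [^] p = \<one>" and cp: "c [^] p = \<one>" using Xexp aX cX by auto
  have orda: "ord a = p" using assms(8,10) by blast
  have Ap: "\<forall>x\<in>A. \<forall>y\<in>A. \<exists>k. (x \<otimes> y) [^] (p ^ k) = \<one>"
  proof (intro ballI)
    fix x y assume x: "x \<in> A" and y: "y \<in> A"
    have "p_element p G (x \<otimes> y)" using assms(9) x y by blast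
    then obtain k where "x \<otimes> y \<in> carrier G" "ord (x \<otimes> y) = p ^ k" unfolding p_element_def by blast
    then have "(x \<otimes> y) [^] (p ^ k) = \<one>" using pow_ord_eq_1 by metis
    then show "\<exists>k. (x \<otimes> y) [^] (p ^ k) = \<one>" by blast
  qed
  have p1: "p > 1" using prime_gt_1_nat[OF pr] .
  have Xsub: "XX \<subseteq> (\<lambda>(i, j). a [^] i \<otimes> c [^] j) ` ({..<p} \<times> {..<p})"
    unfolding XX_def by (rule gen_two[OF aC cC ac ap cp]) (use p1 in simp)
  have finX: "finite XX" using fin subgroup.subset[OF Xs] finite_subset by blast
  have c1: "c \<noteq> \<one>"
  proof
    assume c1: "c = \<one>"
    have "(\<lambda>(i, j). a [^] i \<otimes> c [^] j) ` ({..<p} \<times> {..<p}) \<subseteq> (\<lambda>i. a [^] i) ` {..<p}"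
      using c1 aC by auto
    then have "XX \<subseteq> (\<lambda>i. a [^] i) ` {..<p}" using Xsub by blast
    then have "card XX \<le> card ((\<lambda>i. a [^] i) ` {..<p})" by (rule card_mono[rotated]) simp
    also have "\<dots> \<le> card {..<p}" by (rule card_image_le) simp
    finally have "p ^ 2 \<le> p" using Xcard by simp
    then show False using p1 by (simp add: power2_eq_square)
  qed
  have conjsub: "conj_class G a \<inter> XX \<subseteq> (\<lambda>m. a \<otimes> c [^] m) ` {..<p}"
  proof
    fix x assume x: "x \<in> conj_class G a \<inter> XX"
    then obtain g where g: "g \<in> carrier G" "x = g \<otimes> a \<otimes> inv g" unfolding conj_class_def by blast
    have "x \<in> (\<lambda>(i, j). a [^] i \<otimes> c [^] j) ` ({..<p} \<times> {..<p})" using x Xsub by blast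
    then obtain ij where ij0: "ij \<in> {..<p} \<times> {..<p}" "x = (\<lambda>(i, j). a [^] i \<otimes> c [^] j) ij" by (rule imageE)
    obtain i j where "ij = (i, j)" by (cases ij)
    then have ij: "i < p" "j < p" "x = a [^] i \<otimes> c [^] j" using ij0 by auto
    have "g \<otimes> a \<otimes> inv g \<otimes> inv a \<in> derived_set G (carrier G)" using g aC by blast
    then have d: "x \<otimes> inv a \<in> derived G (carrier G)" unfolding derived_def using g(2) by (auto intro: generate.incl)
    have cj: "c [^] j \<in> derived G (carrier G)" using sub_pow_closed[OF Gd assms(12)] .
    have "x \<otimes> inv a = a [^] i \<otimes> (c [^] j \<otimes> inv a)" using ij aC cC by (simp add: m_assoc)
    also have "c [^] j \<otimes> inv a = inv a \<otimes> c [^] j"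
      using comm_inv[OF nat_pow_closed[OF cC] aC] g_comm_pow[OF aC cC ac, of j] by simp
    finally have "x \<otimes> inv a = (a [^] i \<otimes> inv a) \<otimes> c [^] j" using aC cC by (simp add: m_assoc)
    then have "a [^] i \<otimes> inv a = (x \<otimes> inv a) \<otimes> inv (c [^] j)" using aC cC ij by (simp add: m_assoc)
    then have ai: "a [^] i \<otimes> inv a \<in> derived G (carrier G)"
      using subgroup.m_closed[OF Gd d subgroup.m_inv_closed[OF Gd cj]] by simp
    have "i = 1"
    proof (rule ccontr)
      assume i1: "i \<noteq> 1"
      show False
      proof (cases "i = 0")
        case True
        then have "inv a \<in> derived G (carrier G)" using ai aC by simp
        then have "inv (inv a) \<in> derived G (carrier G)" using subgroup.m_inv_closed[OF Gd] by blast
        then show False using assms(11) aC by simp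
      next
        case False
        then obtain r where r: "i = Suc r" by (cases i) auto
        then have "a [^] i \<otimes> inv a = a [^] r" using aC by (simp add: m_assoc)
        then have "a [^] r \<in> derived G (carrier G)" using ai by simp
        moreover have "0 < r" "r < p" using r i1 ij by auto
        ultimately have "a \<in> derived G (carrier G)" using pow_in_sub_imp[OF Gd aC orda pr] by blast
        then show False using assms(11) by simp
      qed
    qed
    then have "x = a \<otimes> c [^] j" using ij aC by simp
    then show "x \<in> (\<lambda>m. a \<otimes> c [^] m) ` {..<p}" using ij by blast
  qed
  show ?thesis
  proof (rule ccontr)
    assume nlt: "\<not> card (conj_class G a \<inter> generate G {c, a}) < p"
    have cle: "card ((\<lambda>m. a \<otimes> c [^] m) ` {..<p}) \<le> p" using card_image_le[of "{..<p}"] by simp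
    have "card ((\<lambda>m. a \<otimes> c [^] m) ` {..<p}) \<le> card (conj_class G a \<inter> XX)"
      using nlt cle unfolding XX_def by simp
    then have eq: "conj_class G a \<inter> XX = (\<lambda>m. a \<otimes> c [^] m) ` {..<p}"
      using card_seteq[OF _ conjsub] by simp
    have inA: "a \<otimes> c [^] m \<in> A" if "m < p" for m
    proof -
      have "a \<otimes> c [^] m \<in> conj_class G a" using eq that by blast
      then obtain g where "g \<in> carrier G" "a \<otimes> c [^] m = g \<otimes> a \<otimes> inv g" unfolding conj_class_def by blast
      then show ?thesis using Anorm assms(10) by simp
    qed
    have aA: "\<And>m::nat. a \<otimes> c [^] m \<in> A"
    proof -
      fix m :: nat
      have "c [^] m = c [^] (m mod p)" using g_pow_mod[OF cC cp] .
      moreover have "m mod p < p" using p1 by simp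
      ultimately show "a \<otimes> c [^] m \<in> A" using inA by simp
    qed
    obtain V where V: "V \<lhd> G" "\<not> p dvd card V" "\<exists>v\<in>V. v \<otimes> c \<noteq> c \<otimes> v"
      using exists_noncentral[OF fin sol pr Op cC cp c1] by blast
    show False using chain_contra[OF pr sol Anorm AC Ap aC cC ac ap cp aA V] .
  qed
qed

end
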